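(* Let $M$ be an extrinsically homogeneous Lagrangian submanifold of $N$. Suppose there is a unique $\Delta_1$-orthonormal frame $\{E_1,E_2,E_3\}$ with respect to which $A$ and $B$ take type I form. Then the angle functions $\theta_1,\theta_2,\theta_3$ and all the functions $h_{ij}^k$ and $\omega_{ij}^k$ associated to this frame are constant on $M$.
   Context: Let $\langle\alpha,\beta\rangle=\tfrac12\operatorname{tr}(\alpha\beta)$ on $\mathfrak{sl}(2,\mathbb R)$ (traceless real $2\times2$ matrices); tangent vectors of $\mathrm{SL}(2,\mathbb R)$ at $a$ are $a\alpha$, $\alpha\in\mathfrak{sl}(2,\mathbb R)$. On $N=\mathrm{SL}(2,\mathbb R)\times\mathrm{SL}(2,\mathbb R)$: $g((a\alpha,b\beta),(a\gamma,b\delta))=\tfrac23(\langle\alpha,\gamma\rangle+\langle\beta,\delta\rangle)-\tfrac13(\langle\beta,\gamma\rangle+\langle\alpha,\delta\rangle)$, $J(a\alpha,b\beta)=\tfrac1{\sqrt3}(a(\alpha-2\beta),b(2\alpha-\beta))$, $P(a\alpha,b\beta)=(a\beta,b\alpha)$; $\tilde\nabla$ is the Levi-Civita connection of $g$. The maps $\phi_{(a,b,c)}(p,q)=(apc^{-1},bqc^{-1})$, $a,b,c\in\mathrm{SL}(2,\mathbb R)$, form the group $\mathrm{Iso}_o$. A Lagrangian submanifold $M$ is 3-dimensional with nondegenerate induced metric and $J(TM)$ equal to the normal bundle; $P|_{TM}=A+JB$ with $A,B:TM\to TM$. It is extrinsically homogeneous if a Lie subgroup of $\mathrm{Iso}_o$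 acts transitively on it. $\nabla$ and $h$ are defined by $\tilde\nabla_XY=\nabla_XY+h(X,Y)$; for a frame $\{E_i\}$, $\nabla_{E_i}E_j=\sum_k\omega_{ij}^kE_k$ and $h(E_i,E_j)=\sum_kh_{ij}^kJE_k$. A frame is $\Delta_1$-orthonormal if $(g(E_i,E_j))=\mathrm{diag}(-1,1,1)$. $A,B$ take type I form with respect to it if $A=\mathrm{diag}(\cos2\theta_1,\cos2\theta_2,\cos2\theta_3)$ and $B=\mathrm{diag}(\sin2\theta_1,\sin2\theta_2,\sin2\theta_3)$ (i.e. $AE_i=\cos2\theta_iE_i$, $BE_i=\sin2\theta_iE_i$) for functions $\theta_i$ (the angle functions) with $\theta_1+\theta_2+\theta_3\equiv0\pmod\pi$. *)

theory Defs
  imports "HOL-Analysis.Analysis"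
begin

type_synonym mat2 = "real^2^2"
type_synonym pt = "mat2 \<times> mat2"   \<comment> \<open>ambient space containing N = SL(2,R) x SL(2,R)\<close>

fun Ck_on :: "nat \<Rightarrow> ('a::euclidean_space \<Rightarrow> 'b::euclidean_space) \<Rightarrow> 'a set \<Rightarrow> bool" where
  "Ck_on 0 f U = continuous_on U f"
| "Ck_on (Suc k) f U =
     ((\<forall>x\<in>U. f differentiable (at x)) \<and>
      (\<forall>v. Ck_on k (\<lambda>x. frechet_derivative f (at x) v) U))"

definition smooth_on :: "('a::euclidean_space \<Rightarrow> 'b::euclidean_space) \<Rightarrow> 'a set \<Rightarrow> bool" where
  "smooth_on f U \<longleftrightarrow> open U \<and> (\<forall>k. Ck_on k f U)"

definition SL2 :: "mat2 set" where "SL2 = {a. det a = 1}"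
definition sl2 :: "mat2 set" where "sl2 = {\<alpha>. trace \<alpha> = 0}"
definition NN :: "pt set" where "NN = SL2 \<times> SL2"
definition galg :: "pt set" where "galg = sl2 \<times> sl2"

definition ip :: "mat2 \<Rightarrow> mat2 \<Rightarrow> real" where "ip \<alpha> \<beta> = trace (\<alpha> ** \<beta>) / 2"

text \<open>left trivialisation: the tangent vector (a alpha, b beta) at (a,b) corresponds to (alpha,beta)\<close>
definition lt :: "pt \<Rightarrow> pt \<Rightarrow> pt" where
  "lt p v = (matrix_inv (fst p) ** fst v, matrix_inv (snd p) ** snd v)"
definition lmul :: "pt \<Rightarrow> pt \<Rightarrow> pt" where
  "lmul p u = (fst p ** fst u, snd p ** snd u)"

definition TN :: "pt \<Rightarrow> pt set" where "TN p = {v. lt p v \<in> galg}"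

definition gL :: "pt \<Rightarrow> pt \<Rightarrow> real" where
  "gL u w = 2/3 * (ip (fst u) (fst w) + ip (snd u) (snd w))
          - 1/3 * (ip (snd u) (fst w) + ip (fst u) (snd w))"

definition gN :: "pt \<Rightarrow> pt \<Rightarrow> pt \<Rightarrow> real" where "gN p v w = gL (lt p v) (lt p w)"

definition JN :: "pt \<Rightarrow> pt \<Rightarrow> pt" where
  "JN p v = lmul p ((1 / sqrt 3) *\<^sub>R (fst (lt p v) - 2 *\<^sub>R snd (lt p v)),
                    (1 / sqrt 3) *\<^sub>R (2 *\<^sub>R fst (lt p v) - snd (lt p v)))"

definition PN :: "pt \<Rightarrow> pt \<Rightarrow> pt" where
  "PN p v = lmul p (snd (lt p v), fst (lt p v))"

definition brk :: "pt \<Rightarrow> pt \<Rightarrow> pt" where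
  "brk u w = (fst u ** fst w - fst w ** fst u, snd u ** snd w - snd w ** snd u)"

text \<open>Levi-Civita connection of the left-invariant metric g on left-invariant fields (Koszul formula)\<close>
definition Gam :: "pt \<Rightarrow> pt \<Rightarrow> pt" where
  "Gam u w = (THE z. z \<in> galg \<and> (\<forall>x\<in>galg.
      gL z x = (gL (brk u w) x - gL (brk w x) u + gL (brk x u) w) / 2))"

text \<open>Levi-Civita connection of g: nabla~_v Y at p, for a vector field Y (smooth near p) and v in T_p N\<close>
definition LC :: "pt \<Rightarrow> (pt \<Rightarrow> pt) \<Rightarrow> pt \<Rightarrow> pt" where
  "LC p Y v = lmul p (frechet_derivative (\<lambda>q. lt q (Y q)) (at p) v + Gam (lt p v) (lt p (Y p)))"

definition phi :: "mat2 \<Rightarrow> mat2 \<Rightarrow> mat2 \<Rightarrow> pt \<Rightarrow> pt" where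
  "phi a b c x = (a ** fst x ** matrix_inv c, b ** snd x ** matrix_inv c)"

definition Iso_o :: "(pt \<Rightarrow> pt) set" where
  "Iso_o = {phi a b c | a b c. a \<in> SL2 \<and> b \<in> SL2 \<and> c \<in> SL2}"

definition submanifold3 :: "pt set \<Rightarrow> bool" where
  "submanifold3 M \<longleftrightarrow> (\<forall>p\<in>M. \<exists>U V (f :: real^3 \<Rightarrow> pt). open U \<and> p \<in> U \<and> open V \<and>
      smooth_on f V \<and> f ` V = M \<inter> U \<and> inj_on f V \<and> continuous_on (M \<inter> U) (inv_into V f) \<and>
      (\<forall>x\<in>V. inj (frechet_derivative f (at x))))"

definition TM :: "pt set \<Rightarrow> pt \<Rightarrow> pt set" where
  "TM M p = {v. \<exists>\<gamma>. \<gamma> 0 = p \<and> range \<gamma> \<subseteq> M \<and> (\<gamma> has_vector_derivative v) (at 0)}"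

definition normal_space :: "pt set \<Rightarrow> pt \<Rightarrow> pt set" where
  "normal_space M p = {w \<in> TN p. \<forall>v\<in>TM M p. gN p v w = 0}"

definition lagrangian :: "pt set \<Rightarrow> bool" where
  "lagrangian M \<longleftrightarrow> M \<subseteq> NN \<and> submanifold3 M \<and>
     (\<forall>p\<in>M. (\<forall>v\<in>TM M p. (\<forall>w\<in>TM M p. gN p v w = 0) \<longrightarrow> v = 0) \<and>
             JN p ` TM M p = normal_space M p)"

definition ext_homogeneous :: "pt set \<Rightarrow> bool" where
  "ext_homogeneous M \<longleftrightarrow> (\<exists>G. G \<subseteq> Iso_o \<and> id \<in> G \<and>
      (\<forall>f\<in>G. \<forall>f'\<in>G. f \<circ> f' \<in> G) \<and> (\<forall>f\<in>G. \<exists>f'\<in>G. f \<circ> f' = id \<and> f' \<circ> f = id) \<and>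
      (\<forall>f\<in>G. f ` M = M) \<and> (\<forall>p\<in>M. \<forall>q\<in>M. \<exists>f\<in>G. f p = q))"

definition AB :: "pt set \<Rightarrow> pt \<Rightarrow> pt \<Rightarrow> pt \<times> pt" where
  "AB M p v = (THE xy. fst xy \<in> TM M p \<and> snd xy \<in> TM M p \<and> PN p v = fst xy + JN p (snd xy))"

definition opA :: "pt set \<Rightarrow> pt \<Rightarrow> pt \<Rightarrow> pt" where "opA M p v = fst (AB M p v)"
definition opB :: "pt set \<Rightarrow> pt \<Rightarrow> pt \<Rightarrow> pt" where "opB M p v = snd (AB M p v)"

definition Delta1_frame :: "pt set \<Rightarrow> pt \<Rightarrow> (nat \<Rightarrow> pt) \<Rightarrow> bool" where
  "Delta1_frame M p e \<longleftrightarrow> (\<forall>i\<in>{1,2,3}. e i \<in> TM M p) \<and>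
     (\<forall>i\<in>{1,2,3}. \<forall>j\<in>{1,2,3}. gN p (e i) (e j) =
        (if i = j then (if i = 1 then -1 else 1) else 0))"

definition typeI :: "pt set \<Rightarrow> pt \<Rightarrow> (nat \<Rightarrow> pt) \<Rightarrow> (nat \<Rightarrow> real) \<Rightarrow> bool" where
  "typeI M p e \<theta> \<longleftrightarrow> (\<forall>i\<in>{1,2,3}. opA M p (e i) = cos (2 * \<theta> i) *\<^sub>R e i \<and>
                                    opB M p (e i) = sin (2 * \<theta> i) *\<^sub>R e i) \<and>
     (\<exists>k::int. \<theta> 1 + \<theta> 2 + \<theta> 3 = of_int k * pi)"

end

theory Submission
  imports Defs
begin


lemma sum_UNIV_2: "(\<Sum>i\<in>(UNIV::2 set). f i) = f 1 + f 2"
  by (simp add: UNIV_2)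

lemma mat2_eq_iff: "(A::mat2) = B \<longleftrightarrow> A$1$1 = B$1$1 \<and> A$1$2 = B$1$2 \<and> A$2$1 = B$2$1 \<and> A$2$2 = B$2$2"
  by (auto simp: vec_eq_iff forall_2)

lemma mm_nth: "((A::mat2) ** (B::mat2))$i$j = A$i$1*B$1$j + A$i$2*B$2$j"
  by (simp add: matrix_matrix_mult_def sum_UNIV_2)

lemma trace2: "trace (A::mat2) = A$1$1 + A$2$2"
  by (simp add: trace_def sum_UNIV_2)

lemma mat1_nth: "(mat 1 :: mat2)$i$j = (if i = j then 1 else 0)"
  by (simp add: mat_def)

definition adj2 :: "mat2 \<Rightarrow> mat2" where
  "adj2 A = trace A *\<^sub>R mat 1 - A"

definition inv2 :: "mat2 \<Rightarrow> mat2" where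
  "inv2 A = (1 / det A) *\<^sub>R adj2 A"

lemma mm_scaleR_right: "(A::mat2) ** (c *\<^sub>R (B::mat2)) = c *\<^sub>R (A ** B)"
  by (simp add: mat2_eq_iff mm_nth algebra_simps)
lemma mm_scaleR_left: "(c *\<^sub>R (A::mat2)) ** (B::mat2) = c *\<^sub>R (A ** B)"
  by (simp add: mat2_eq_iff mm_nth algebra_simps)

lemma adj2_right: "A ** adj2 A = det A *\<^sub>R mat 1"
  by (simp add: mat2_eq_iff mm_nth adj2_def trace2 mat1_nth det_2 algebra_simps)
lemma adj2_left: "adj2 A ** A = det A *\<^sub>R mat 1"
  by (simp add: mat2_eq_iff mm_nth adj2_def trace2 mat1_nth det_2 algebra_simps)

lemma inv2_right: "det A \<noteq> 0 \<Longrightarrow> A ** inv2 A = mat 1"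
  by (simp add: inv2_def mm_scaleR_right adj2_right)

lemma inv2_left: "det A \<noteq> 0 \<Longrightarrow> inv2 A ** A = mat 1"
  by (simp add: inv2_def mm_scaleR_left adj2_left)

lemma matrix_inv_eq_inv2: assumes "det (A::mat2) \<noteq> 0" shows "matrix_inv A = inv2 A"
proof -
  have ex: "\<exists>A'. A ** A' = mat 1 \<and> A' ** A = mat 1" using inv2_right inv2_left assms by blast
  let ?B = "matrix_inv A"
  have B: "A ** ?B = mat 1 \<and> ?B ** A = mat 1" unfolding matrix_inv_def by (rule someI_ex[OF ex])
  have "?B = ?B ** (A ** inv2 A)" using inv2_right[OF assms] by (simp add: matrix_mul_rid)
  also have "\<dots> = (?B ** A) ** inv2 A" by (simp add: matrix_mul_assoc)
  also have "\<dots> = inv2 A" using B by (simp add: matrix_mul_lid)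
  finally show ?thesis .
qed

lemma minv_right: "det (A::mat2) \<noteq> 0 \<Longrightarrow> A ** matrix_inv A = mat 1"
  by (simp add: matrix_inv_eq_inv2 inv2_right)
lemma minv_left: "det (A::mat2) \<noteq> 0 \<Longrightarrow> matrix_inv A ** A = mat 1"
  by (simp add: matrix_inv_eq_inv2 inv2_left)

lemma minv_unique: assumes "det (A::mat2) \<noteq> 0" "A ** B = mat 1"
  shows "matrix_inv A = B"
proof -
  have "matrix_inv A = matrix_inv A ** (A ** B)" using assms by (simp add: matrix_mul_rid)
  also have "\<dots> = B" using minv_left[OF assms(1)] by (simp add: matrix_mul_assoc matrix_mul_lid)
  finally show ?thesis .
qed

lemma det_mm: "det ((A::mat2) ** (B::mat2)) = det A * det B"
  by (simp add: det_2 mm_nth algebra_simps)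

lemma det_mat1: "det (mat 1 :: mat2) = 1"
  by (simp add: det_2 mat1_nth)

lemma det_minv: "det (A::mat2) \<noteq> 0 \<Longrightarrow> det (matrix_inv A) = 1 / det A"
  using det_mm[of A "matrix_inv A"] minv_right[of A] det_mat1 by (simp add: field_simps)

lemma minv_mm: assumes "det (A::mat2) \<noteq> 0" "det B \<noteq> 0"
  shows "matrix_inv (A ** B) = matrix_inv B ** matrix_inv A"
proof (rule minv_unique)
  show "det (A ** B) \<noteq> 0" using assms by (simp add: det_mm)
  have "A ** B ** (matrix_inv B ** matrix_inv A) = A ** (B ** matrix_inv B) ** matrix_inv A"
    by (simp add: matrix_mul_assoc)
  thus "A ** B ** (matrix_inv B ** matrix_inv A) = mat 1"
    using assms by (simp add: minv_right matrix_mul_rid)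
qed

lemma minv_minv: "det (A::mat2) \<noteq> 0 \<Longrightarrow> matrix_inv (matrix_inv A) = A"
  by (rule minv_unique) (simp_all add: det_minv minv_left)


lemma mm_add_l: "(A::mat2) ** ((B::mat2) + C) = A ** B + A ** C"
  by (simp add: mat2_eq_iff mm_nth algebra_simps)
lemma mm_add_r: "((A::mat2) + B) ** (C::mat2) = A ** C + B ** C"
  by (simp add: mat2_eq_iff mm_nth algebra_simps)
lemma mm_diff_l: "(A::mat2) ** ((B::mat2) - C) = A ** B - A ** C"
  by (simp add: mat2_eq_iff mm_nth algebra_simps)
lemma mm_diff_r: "((A::mat2) - B) ** (C::mat2) = A ** C - B ** C"
  by (simp add: mat2_eq_iff mm_nth algebra_simps)
lemma mm_uminus_l: "(- (A::mat2)) ** (B::mat2) = - (A ** B)"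
  by (simp add: mat2_eq_iff mm_nth algebra_simps)
lemma mm_uminus_r: "(A::mat2) ** (- (B::mat2)) = - (A ** B)"
  by (simp add: mat2_eq_iff mm_nth algebra_simps)
lemma mm_zero_l: "(0::mat2) ** (B::mat2) = 0"
  by (simp add: mat2_eq_iff mm_nth)
lemma mm_zero_r: "(A::mat2) ** (0::mat2) = 0"
  by (simp add: mat2_eq_iff mm_nth)
lemma mm_assoc2: "(A::mat2) ** (B::mat2) ** (C::mat2) = A ** (B ** C)"
  by (simp add: matrix_mul_assoc)

lemmas mmalg = mm_add_l mm_add_r mm_diff_l mm_diff_r mm_uminus_l mm_uminus_r mm_zero_l mm_zero_r
  mm_scaleR_left mm_scaleR_right

lemma trace_scaleR: "trace (c *\<^sub>R (A::mat2)) = c * trace A" by (simp add: trace2 algebra_simps)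
lemma trace_uminus: "trace (- (A::mat2)) = - trace A" by (simp add: trace2)
lemma trace_zero2: "trace (0::mat2) = 0" by (simp add: trace2)
lemmas tralg = trace_add trace_sub trace_scaleR trace_uminus trace_zero2

definition Jp :: "pt \<Rightarrow> pt" where
  "Jp u = ((1 / sqrt 3) *\<^sub>R (fst u - 2 *\<^sub>R snd u), (1 / sqrt 3) *\<^sub>R (2 *\<^sub>R fst u - snd u))"
definition Pp :: "pt \<Rightarrow> pt" where "Pp u = (snd u, fst u)"
definition Ad :: "mat2 \<Rightarrow> pt \<Rightarrow> pt" where
  "Ad c u = (c ** fst u ** matrix_inv c, c ** snd u ** matrix_inv c)"

definition inN :: "pt \<Rightarrow> bool" where "inN p \<longleftrightarrow> det (fst p) \<noteq> 0 \<and> det (snd p) \<noteq> 0"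

lemma NN_inN: "p \<in> NN \<Longrightarrow> inN p"
  by (auto simp: NN_def SL2_def inN_def)

lemma JN_eq: "JN p v = lmul p (Jp (lt p v))" by (simp add: JN_def Jp_def)
lemma PN_eq: "PN p v = lmul p (Pp (lt p v))" by (simp add: PN_def Pp_def)

lemma lt_lmul: "inN p \<Longrightarrow> lt p (lmul p u) = u"
  by (simp add: inN_def lt_def lmul_def matrix_mul_assoc minv_left prod_eq_iff)
lemma lmul_lt: "inN p \<Longrightarrow> lmul p (lt p v) = v"
  by (simp add: inN_def lt_def lmul_def matrix_mul_assoc minv_right prod_eq_iff)

lemma lt_add: "lt p (v + w) = lt p v + lt p w" by (simp add: lt_def mmalg)
lemma lt_diff: "lt p (v - w) = lt p v - lt p w" by (simp add: lt_def mmalg)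
lemma lt_scaleR: "lt p (c *\<^sub>R v) = c *\<^sub>R lt p v" by (simp add: lt_def mmalg)
lemma lt_uminus: "lt p (- v) = - lt p v" by (simp add: lt_def mmalg)
lemma lt_zero: "lt p 0 = 0" by (simp add: lt_def mmalg zero_prod_def)
lemma lmul_add: "lmul p (v + w) = lmul p v + lmul p w" by (simp add: lmul_def mmalg)
lemma lmul_diff: "lmul p (v - w) = lmul p v - lmul p w" by (simp add: lmul_def mmalg)
lemma lmul_scaleR: "lmul p (c *\<^sub>R v) = c *\<^sub>R lmul p v" by (simp add: lmul_def mmalg)
lemma lmul_uminus: "lmul p (- v) = - lmul p v" by (simp add: lmul_def mmalg)
lemma lmul_zero: "lmul p 0 = 0" by (simp add: lmul_def mmalg zero_prod_def)
lemmas ltalg = lt_add lt_diff lt_scaleR lt_uminus lt_zero lmul_add lmul_diff lmul_scaleR lmul_uminus lmul_zero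

lemma ip_sym: "ip a b = ip b a" unfolding ip_def by (metis trace_mul_sym)
lemma ip_add_l: "ip (a + b) c = ip a c + ip b c" by (simp add: ip_def mmalg tralg add_divide_distrib)
lemma ip_add_r: "ip c (a + b) = ip c a + ip c b" by (simp add: ip_def mmalg tralg add_divide_distrib)
lemma ip_diff_l: "ip (a - b) c = ip a c - ip b c" by (simp add: ip_def mmalg tralg diff_divide_distrib)
lemma ip_diff_r: "ip c (a - b) = ip c a - ip c b" by (simp add: ip_def mmalg tralg diff_divide_distrib)
lemma ip_scaleR_l: "ip (r *\<^sub>R a) c = r * ip a c" by (simp add: ip_def mmalg tralg)
lemma ip_scaleR_r: "ip c (r *\<^sub>R a) = r * ip c a" by (simp add: ip_def mmalg tralg)
lemma ip_uminus_l: "ip (- a) c = - ip a c" by (simp add: ip_def mmalg tralg)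
lemma ip_uminus_r: "ip c (- a) = - ip c a" by (simp add: ip_def mmalg tralg)
lemma ip_zero_l: "ip 0 c = 0" by (simp add: ip_def mmalg tralg)
lemma ip_zero_r: "ip c 0 = 0" by (simp add: ip_def mmalg tralg)
lemmas ipalg = ip_add_l ip_add_r ip_diff_l ip_diff_r ip_scaleR_l ip_scaleR_r ip_uminus_l ip_uminus_r
  ip_zero_l ip_zero_r

lemma gL_sym: "gL u w = gL w u" by (simp add: gL_def ip_sym)
lemma gL_add_l: "gL (a + b) c = gL a c + gL b c" by (simp add: gL_def ipalg algebra_simps)
lemma gL_add_r: "gL c (a + b) = gL c a + gL c b" by (simp add: gL_def ipalg algebra_simps)
lemma gL_diff_l: "gL (a - b) c = gL a c - gL b c" by (simp add: gL_def ipalg algebra_simps)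
lemma gL_diff_r: "gL c (a - b) = gL c a - gL c b" by (simp add: gL_def ipalg algebra_simps)
lemma gL_scaleR_l: "gL (r *\<^sub>R a) c = r * gL a c" by (simp add: gL_def ipalg algebra_simps)
lemma gL_scaleR_r: "gL c (r *\<^sub>R a) = r * gL c a" by (simp add: gL_def ipalg algebra_simps)
lemma gL_uminus_l: "gL (- a) c = - gL a c" by (simp add: gL_def ipalg algebra_simps)
lemma gL_uminus_r: "gL c (- a) = - gL c a" by (simp add: gL_def ipalg algebra_simps)
lemma gL_zero_l: "gL 0 c = 0" by (simp add: gL_def ipalg)
lemma gL_zero_r: "gL c 0 = 0" by (simp add: gL_def ipalg)
lemmas gLalg = gL_add_l gL_add_r gL_diff_l gL_diff_r gL_scaleR_l gL_scaleR_r gL_uminus_l gL_uminus_r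
  gL_zero_l gL_zero_r

lemma gL_sum_l: "gL (\<Sum>k\<in>S. f k) c = (\<Sum>k\<in>S. gL (f k) c)"
  by (induction S rule: infinite_finite_induct) (auto simp: gLalg)


lemma gL_Jp_aux: assumes s: "s * s = (1/3::real)"
  shows "gL (s *\<^sub>R (a - 2 *\<^sub>R b), s *\<^sub>R (2 *\<^sub>R a - b)) (s *\<^sub>R (c - 2 *\<^sub>R d), s *\<^sub>R (2 *\<^sub>R c - d)) = gL (a,b) (c,d)"
proof -
  have e: "ip b c = ip c b" "ip b a = ip a b" "ip d c = ip c d" by (simp_all add: ip_sym)
  have ss: "\<And>x. s * (s * x) = x / 3" using s by (metis mult.assoc mult.commute times_divide_eq_right mult_1)
  show ?thesis
    apply (simp add: gL_def ipalg e)
    apply (simp add: algebra_simps ss)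
    apply (simp add: field_simps)
    done
qed

lemma sqrt3_sq: "(1 / sqrt 3) * (1 / sqrt 3) = (1/3::real)"
proof -
  have "sqrt 3 * sqrt 3 = (3::real)" by simp
  thus ?thesis by (simp add: field_simps)
qed

lemma sqrt3_sq': "(1 / sqrt 3) * ((1 / sqrt 3) * x) = x / (3::real)"
  using sqrt3_sq by (metis mult.assoc mult.commute times_divide_eq_right mult_1)

lemma gL_Jp: "gL (Jp u) (Jp w) = gL u w"
  using gL_Jp_aux[OF sqrt3_sq, of "fst u" "snd u" "fst w" "snd w"] by (simp add: Jp_def)

lemma Jp_Jp: "Jp (Jp u) = - u"
  by (simp add: Jp_def prod_eq_iff mat2_eq_iff algebra_simps sqrt3_sq')

lemma Jp_add: "Jp (u + w) = Jp u + Jp w" by (simp add: Jp_def algebra_simps)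
lemma Jp_scaleR: "Jp (r *\<^sub>R u) = r *\<^sub>R Jp u" by (simp add: Jp_def algebra_simps)
lemma Jp_diff: "Jp (u - w) = Jp u - Jp w" by (simp add: Jp_def algebra_simps)
lemma Jp_uminus: "Jp (- u) = - Jp u" by (simp add: Jp_def algebra_simps)
lemma Jp_zero: "Jp 0 = 0" by (simp add: Jp_def zero_prod_def)

lemma gL_Jp_skew: "gL (Jp u) w = - gL u (Jp w)"
proof -
  have "gL (Jp u) w = gL (Jp (Jp u)) (Jp w)" by (simp add: gL_Jp)
  thus ?thesis by (simp add: Jp_Jp gLalg)
qed

lemma Pp_Jp: "Pp (Jp u) = - Jp (Pp u)"
  by (simp add: Pp_def Jp_def prod_eq_iff algebra_simps)
lemma gL_Pp: "gL (Pp u) w = gL u (Pp w)"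
  unfolding gL_def Pp_def using ip_sym by (simp add: algebra_simps)
lemma Pp_add: "Pp (u + w) = Pp u + Pp w" by (simp add: Pp_def)
lemma Pp_scaleR: "Pp (r *\<^sub>R u) = r *\<^sub>R Pp u" by (simp add: Pp_def)
lemma Pp_Pp: "Pp (Pp u) = u" by (simp add: Pp_def)

definition cj :: "mat2 \<Rightarrow> mat2 \<Rightarrow> mat2" where "cj c x = c ** x ** matrix_inv c"

lemma Ad_cj: "Ad c u = (cj c (fst u), cj c (snd u))" by (simp add: Ad_def cj_def)

lemma cj_add: "cj c (x + y) = cj c x + cj c y" by (simp add: cj_def mmalg)
lemma cj_diff: "cj c (x - y) = cj c x - cj c y" by (simp add: cj_def mmalg)
lemma cj_scaleR: "cj c (r *\<^sub>R x) = r *\<^sub>R cj c x" by (simp add: cj_def mmalg)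
lemma cj_uminus: "cj c (- x) = - cj c x" by (simp add: cj_def mmalg)
lemma cj_mm: "det c \<noteq> 0 \<Longrightarrow> cj c (x ** y) = cj c x ** cj c y"
proof -
  assume d: "det c \<noteq> 0"
  have "cj c x ** cj c y = c ** x ** (matrix_inv c ** c) ** y ** matrix_inv c"
    by (simp add: cj_def matrix_mul_assoc)
  thus ?thesis using d by (simp add: minv_left cj_def matrix_mul_assoc)
qed
lemma trace_cj: "det c \<noteq> 0 \<Longrightarrow> trace (cj c x) = trace x"
proof -
  assume d: "det c \<noteq> 0"
  have "trace (cj c x) = trace ((matrix_inv c ** c) ** x)"
    unfolding cj_def by (metis trace_mul_sym matrix_mul_assoc)
  thus ?thesis using d by (simp add: minv_left)
qed
lemma ip_cj: "det c \<noteq> 0 \<Longrightarrow> ip (cj c x) (cj c y) = ip x y"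
  by (simp add: ip_def cj_mm[symmetric] trace_cj)

lemma gL_Ad: "det c \<noteq> 0 \<Longrightarrow> gL (Ad c u) (Ad c w) = gL u w"
  by (simp add: gL_def Ad_cj ip_cj)
lemma Jp_Ad: "Jp (Ad c u) = Ad c (Jp u)"
  by (simp add: Jp_def Ad_cj cj_diff cj_scaleR)
lemma Pp_Ad: "Pp (Ad c u) = Ad c (Pp u)"
  by (simp add: Pp_def Ad_cj)
lemma Ad_add: "Ad c (u + w) = Ad c u + Ad c w" by (simp add: Ad_cj cj_add)
lemma Ad_diff: "Ad c (u - w) = Ad c u - Ad c w" by (simp add: Ad_cj cj_diff)
lemma Ad_scaleR: "Ad c (r *\<^sub>R u) = r *\<^sub>R Ad c u" by (simp add: Ad_cj cj_scaleR)
lemma Ad_uminus: "Ad c (- u) = - Ad c u" by (simp add: Ad_cj cj_uminus)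
lemma brk_Ad: "det c \<noteq> 0 \<Longrightarrow> brk (Ad c u) (Ad c w) = Ad c (brk u w)"
  by (simp add: brk_def Ad_cj cj_mm cj_diff)
lemma galg_Ad: "det c \<noteq> 0 \<Longrightarrow> Ad c u \<in> galg \<longleftrightarrow> u \<in> galg"
  by (simp add: galg_def sl2_def Ad_cj trace_cj mem_Times_iff)

lemma phi_lt: assumes "det a \<noteq> 0" "det b \<noteq> 0" "det c \<noteq> 0" "inN p"
  shows "lt (phi a b c p) (phi a b c v) = Ad c (lt p v)"
proof -
  have i1: "matrix_inv (a ** fst p ** matrix_inv c) = c ** matrix_inv (fst p) ** matrix_inv a"
    using assms by (simp add: minv_mm det_mm det_minv minv_minv inN_def matrix_mul_assoc)
  have i2: "matrix_inv (b ** snd p ** matrix_inv c) = c ** matrix_inv (snd p) ** matrix_inv b"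
    using assms by (simp add: minv_mm det_mm det_minv minv_minv inN_def matrix_mul_assoc)
  have e1: "c ** matrix_inv (fst p) ** matrix_inv a ** (a ** fst v ** matrix_inv c)
      = c ** matrix_inv (fst p) ** (matrix_inv a ** a) ** fst v ** matrix_inv c"
    by (simp add: matrix_mul_assoc)
  have e2: "c ** matrix_inv (snd p) ** matrix_inv b ** (b ** snd v ** matrix_inv c)
      = c ** matrix_inv (snd p) ** (matrix_inv b ** b) ** snd v ** matrix_inv c"
    by (simp add: matrix_mul_assoc)
  show ?thesis unfolding lt_def phi_def Ad_def fst_conv snd_conv i1 i2 e1 e2 using assms
    by (simp add: minv_left matrix_mul_assoc)
qed

lemma phi_lmul: assumes "det c \<noteq> 0"
  shows "lmul (phi a b c p) (Ad c u) = phi a b c (lmul p u)"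
proof -
  have "a ** fst p ** matrix_inv c ** (c ** fst u ** matrix_inv c) = a ** fst p ** (matrix_inv c ** c) ** fst u ** matrix_inv c"
       "b ** snd p ** matrix_inv c ** (c ** snd u ** matrix_inv c) = b ** snd p ** (matrix_inv c ** c) ** snd u ** matrix_inv c"
    by (simp_all add: matrix_mul_assoc)
  thus ?thesis using assms by (simp add: lmul_def phi_def Ad_def minv_left matrix_mul_assoc)
qed

lemma phi_add: "phi a b c (x + y) = phi a b c x + phi a b c y" by (simp add: phi_def mmalg)
lemma phi_diff: "phi a b c (x - y) = phi a b c x - phi a b c y" by (simp add: phi_def mmalg)
lemma phi_scaleR: "phi a b c (r *\<^sub>R x) = r *\<^sub>R phi a b c x" by (simp add: phi_def mmalg)
lemma phi_uminus: "phi a b c (- x) = - phi a b c x" by (simp add: phi_def mmalg)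
lemma phi_zero: "phi a b c 0 = 0" by (simp add: phi_def mmalg zero_prod_def)

lemma inN_phi: "det a \<noteq> 0 \<Longrightarrow> det b \<noteq> 0 \<Longrightarrow> det c \<noteq> 0 \<Longrightarrow> inN p \<Longrightarrow> inN (phi a b c p)"
  by (simp add: inN_def phi_def det_mm det_minv)



definition comm :: "mat2 \<Rightarrow> mat2 \<Rightarrow> mat2" where "comm x y = x ** y - y ** x"

definition G0 :: "pt \<Rightarrow> pt \<Rightarrow> pt" where
  "G0 u w = ((1/2) *\<^sub>R (comm (fst u) (fst w) + (1/3) *\<^sub>R (comm (snd u) (fst w) - comm (fst u) (snd w))),
             (1/2) *\<^sub>R (comm (snd u) (snd w) - (1/3) *\<^sub>R (comm (snd u) (fst w) - comm (fst u) (snd w))))"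

lemma koszul_G0: "gL (G0 u w) x = (gL (brk u w) x - gL (brk w x) u + gL (brk x u) w) / 2"
  apply (simp add: G0_def comm_def brk_def gL_def ip_def trace2 mm_nth)
  apply (simp add: field_simps)
  done

lemma galg_iff: "u \<in> galg \<longleftrightarrow> trace (fst u) = 0 \<and> trace (snd u) = 0"
  by (simp add: galg_def sl2_def mem_Times_iff)
lemma galg_add: "u \<in> galg \<Longrightarrow> w \<in> galg \<Longrightarrow> u + w \<in> galg" by (simp add: galg_iff tralg)
lemma galg_diff: "u \<in> galg \<Longrightarrow> w \<in> galg \<Longrightarrow> u - w \<in> galg" by (simp add: galg_iff tralg)
lemma galg_scaleR: "u \<in> galg \<Longrightarrow> r *\<^sub>R u \<in> galg" by (simp add: galg_iff tralg)
lemma galg_uminus: "u \<in> galg \<Longrightarrow> - u \<in> galg" by (simp add: galg_iff tralg)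
lemma galg_zero: "0 \<in> galg" by (simp add: galg_iff tralg)

lemma trace_comm: "trace (comm x y) = 0"
  by (simp add: comm_def trace_sub trace_mul_sym[of x y])

lemma G0_galg: "G0 u w \<in> galg"
  by (simp add: G0_def galg_def sl2_def tralg trace_comm)

lemma gL_nondeg_galg: assumes "z \<in> galg" "\<forall>x\<in>galg. gL z x = 0" shows "z = 0"
proof -
  let ?x = "(2 *\<^sub>R transpose (fst z) + transpose (snd z), transpose (fst z) + 2 *\<^sub>R transpose (snd z))"
  have tz: "trace (fst z) = 0" "trace (snd z) = 0" using assms(1) by (auto simp: galg_def sl2_def)
  have "?x \<in> galg" using tz by (simp add: galg_def sl2_def trace2 transpose_def)
  hence "gL z ?x = 0" using assms(2) by blast
  hence "(fst z$1$1)^2 + (fst z$1$2)^2 + (fst z$2$1)^2 + (fst z$2$2)^2 + (snd z$1$1)^2 + (snd z$1$2)^2 + (snd z$2$1)^2 + (snd z$2$2)^2 = 0"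
    by (simp add: gL_def ip_def trace2 mm_nth transpose_def power2_eq_square field_simps)
  hence "fst z = 0 \<and> snd z = 0"
    by (simp add: mat2_eq_iff add_nonneg_eq_0_iff)
  thus ?thesis by (simp add: prod_eq_iff)
qed

lemma Gam_eq: "Gam u w = G0 u w"
  unfolding Gam_def
proof (rule the_equality)
  show "G0 u w \<in> galg \<and> (\<forall>x\<in>galg. gL (G0 u w) x = (gL (brk u w) x - gL (brk w x) u + gL (brk x u) w) / 2)"
    using G0_galg koszul_G0 by blast
next
  fix z assume z: "z \<in> galg \<and> (\<forall>x\<in>galg. gL z x = (gL (brk u w) x - gL (brk w x) u + gL (brk x u) w) / 2)"
  have "z - G0 u w \<in> galg" using z G0_galg galg_diff by blast
  moreover have "\<forall>x\<in>galg. gL (z - G0 u w) x = 0"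
  proof
    fix x assume "x \<in> galg"
    with z have "gL z x = (gL (brk u w) x - gL (brk w x) u + gL (brk x u) w) / 2" by blast
    hence "gL z x = gL (G0 u w) x" by (simp only: koszul_G0)
    thus "gL (z - G0 u w) x = 0" by (simp add: gLalg)
  qed
  ultimately show "z = G0 u w" using gL_nondeg_galg by fastforce
qed

lemma cj_comm: "det c \<noteq> 0 \<Longrightarrow> cj c (comm x y) = comm (cj c x) (cj c y)"
  by (simp add: comm_def cj_diff cj_mm)

lemma G0_Ad: "det c \<noteq> 0 \<Longrightarrow> G0 (Ad c u) (Ad c w) = Ad c (G0 u w)"
  by (simp add: G0_def Ad_cj cj_comm cj_add cj_diff cj_scaleR)

lemma comm_add_l: "comm (x + y) z = comm x z + comm y z" by (simp add: comm_def mmalg)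
lemma comm_add_r: "comm z (x + y) = comm z x + comm z y" by (simp add: comm_def mmalg)
lemma comm_scaleR_l: "comm (r *\<^sub>R x) z = r *\<^sub>R comm x z" by (simp add: comm_def mmalg scaleR_diff_right)
lemma comm_scaleR_r: "comm z (r *\<^sub>R x) = r *\<^sub>R comm z x" by (simp add: comm_def mmalg scaleR_diff_right)

lemma G0_scaleR_l: "G0 (r *\<^sub>R u) w = r *\<^sub>R G0 u w"
  by (simp add: G0_def comm_scaleR_l scaleR_add_right scaleR_diff_right)
lemma G0_scaleR_r: "G0 u (r *\<^sub>R w) = r *\<^sub>R G0 u w"
  by (simp add: G0_def comm_scaleR_r scaleR_add_right scaleR_diff_right)
lemma G0_add_l: "G0 (u + u') w = G0 u w + G0 u' w"
  by (simp add: G0_def comm_add_l algebra_simps)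


lemma bilinear_mm: "bilinear (\<lambda>(A::mat2) (B::mat2). A ** B)"
  unfolding bilinear_def
  by (auto intro!: linearI simp: mmalg)

lemma bb_mm: "bounded_bilinear (\<lambda>(A::mat2) (B::mat2). A ** B)"
  using bilinear_mm bilinear_conv_bounded_bilinear by blast

lemma bl_entry: "bounded_linear (\<lambda>A::mat2. A $ i $ j)"
  by (rule bounded_linear_compose[OF bounded_linear_vec_nth[of j] bounded_linear_vec_nth[of i]])

lemma linear_trace2: "linear (trace :: mat2 \<Rightarrow> real)"
  by (auto intro!: linearI simp: tralg)
lemma bl_trace: "bounded_linear (trace :: mat2 \<Rightarrow> real)"
  using linear_trace2 linear_conv_bounded_linear by blast

lemma det2_fun: "det = (\<lambda>A::mat2. A$1$1 * A$2$2 - A$1$2 * A$2$1)"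
  by (rule ext) (simp add: det_2)

lemma cont_det: "continuous_on S (det :: mat2 \<Rightarrow> real)"
  unfolding det2_fun
  by (intro continuous_intros bounded_linear.continuous_on[OF bl_entry])

lemma open_det_nz: "open {A::mat2. det A \<noteq> 0}"
  by (rule open_Collect_neq) (simp_all add: cont_det)

lemma bl_adj2: "bounded_linear adj2"
proof -
  have "linear adj2" by (auto intro!: linearI simp: adj2_def tralg algebra_simps)
  thus ?thesis using linear_conv_bounded_linear by blast
qed

lemma has_derivative_det2: "(det has_derivative (\<lambda>H. H$1$1 * A$2$2 + A$1$1 * H$2$2 - (H$1$2 * A$2$1 + A$1$2 * H$2$1))) (at (A::mat2))"
  unfolding det2_fun
  by (auto intro!: derivative_eq_intros bounded_linear.has_derivative[OF bl_entry])

lemma has_derivative_inv2: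
  assumes "det (A::mat2) \<noteq> 0"
  shows "(inv2 has_derivative (\<lambda>H. - (inv2 A ** H ** inv2 A))) (at A)"
proof -
  have "((\<lambda>B. inverse (det B) *\<^sub>R adj2 B) has_derivative
     (\<lambda>H. inverse (det A) *\<^sub>R adj2 H + (- (inverse (det A) * (H$1$1 * A$2$2 + A$1$1 * H$2$2 - (H$1$2 * A$2$1 + A$1$2 * H$2$1)) * inverse (det A))) *\<^sub>R adj2 A)) (at A)"
    using assms
    by (auto intro!: derivative_eq_intros has_derivative_det2 bounded_linear.has_derivative[OF bl_adj2])
  moreover have "(\<lambda>B. inverse (det B) *\<^sub>R adj2 B) = inv2" by (rule ext) (simp add: inv2_def divide_inverse)
  moreover have "(\<lambda>H. inverse (det A) *\<^sub>R adj2 H + (- (inverse (det A) * (H$1$1 * A$2$2 + A$1$1 * H$2$2 - (H$1$2 * A$2$1 + A$1$2 * H$2$1)) * inverse (det A))) *\<^sub>R adj2 A)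
      = (\<lambda>H. - (inv2 A ** H ** inv2 A))"
  proof
    fix H
    have P: "adj2 A ** H ** adj2 A = (H$1$1 * A$2$2 + A$1$1 * H$2$2 - (H$1$2 * A$2$1 + A$1$2 * H$2$1)) *\<^sub>R adj2 A - det A *\<^sub>R adj2 H"
      by (simp add: mat2_eq_iff mm_nth adj2_def trace2 mat1_nth det_2 algebra_simps)
    have "- (inv2 A ** H ** inv2 A) = - ((inverse (det A) * inverse (det A)) *\<^sub>R (adj2 A ** H ** adj2 A))"
      by (simp add: inv2_def mm_scaleR_left mm_scaleR_right divide_inverse)
    also have "\<dots> = inverse (det A) *\<^sub>R adj2 H + (- (inverse (det A) * (H$1$1 * A$2$2 + A$1$1 * H$2$2 - (H$1$2 * A$2$1 + A$1$2 * H$2$1)) * inverse (det A))) *\<^sub>R adj2 A"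
      unfolding P using assms by (simp add: algebra_simps)
    finally show "inverse (det A) *\<^sub>R adj2 H + (- (inverse (det A) * (H$1$1 * A$2$2 + A$1$1 * H$2$2 - (H$1$2 * A$2$1 + A$1$2 * H$2$1)) * inverse (det A))) *\<^sub>R adj2 A = - (inv2 A ** H ** inv2 A)" by simp
  qed
  ultimately show ?thesis by simp
qed

lemma has_derivative_minv:
  assumes "det (A::mat2) \<noteq> 0"
  shows "(matrix_inv has_derivative (\<lambda>H. - (matrix_inv A ** H ** matrix_inv A))) (at A)"
proof -
  have "(inv2 has_derivative (\<lambda>H. - (matrix_inv A ** H ** matrix_inv A))) (at A)"
    using has_derivative_inv2[OF assms] assms by (simp add: matrix_inv_eq_inv2)
  thus ?thesis
    by (rule has_derivative_transform_within_open[OF _ open_det_nz]) (use assms in \<open>auto simp: matrix_inv_eq_inv2\<close>)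
qed

lemma cont_minv: "continuous_on {A::mat2. det A \<noteq> 0} matrix_inv"
  by (rule continuous_at_imp_continuous_on) (use has_derivative_minv has_derivative_continuous in blast)

lemma has_derivative_minv_comp:
  fixes f :: "'a::real_normed_vector \<Rightarrow> mat2"
  assumes "(f has_derivative f') (at x)" "det (f x) \<noteq> 0"
  shows "((\<lambda>y. matrix_inv (f y)) has_derivative (\<lambda>h. - (matrix_inv (f x) ** f' h ** matrix_inv (f x)))) (at x)"
  using has_derivative_compose[OF assms(1) has_derivative_minv[OF assms(2)]] by simp

lemma has_derivative_mm:
  assumes "(f has_derivative f') (at x)" "(g has_derivative g') (at x)"
  shows "((\<lambda>y. (f y :: mat2) ** (g y :: mat2)) has_derivative (\<lambda>h. f x ** g' h + f' h ** g x)) (at x)"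
  using bounded_bilinear.FDERIV[OF bb_mm assms] by simp

definition Dlt :: "pt \<Rightarrow> pt \<Rightarrow> pt \<Rightarrow> pt \<Rightarrow> pt" where
  "Dlt x y dy v = (- (matrix_inv (fst x) ** fst v ** matrix_inv (fst x)) ** fst y + matrix_inv (fst x) ** fst dy,
                   - (matrix_inv (snd x) ** snd v ** matrix_inv (snd x)) ** snd y + matrix_inv (snd x) ** snd dy)"

lemma has_derivative_ltfield:
  assumes "inN x" "(Y has_derivative DY) (at x)"
  shows "((\<lambda>q. lt q (Y q)) has_derivative (\<lambda>v. Dlt x (Y x) (DY v) v)) (at x)"
proof -
  have d1: "det (fst x) \<noteq> 0" "det (snd x) \<noteq> 0" using assms(1) by (auto simp: inN_def)
  have a: "((\<lambda>q. matrix_inv (fst q) ** fst (Y q)) has_derivative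
      (\<lambda>v. matrix_inv (fst x) ** fst (DY v) + (- (matrix_inv (fst x) ** fst v ** matrix_inv (fst x))) ** fst (Y x))) (at x)"
    by (rule has_derivative_mm[OF has_derivative_minv_comp[OF has_derivative_fst[OF has_derivative_ident] d1(1)]
        has_derivative_fst[OF assms(2)]])
  have b: "((\<lambda>q. matrix_inv (snd q) ** snd (Y q)) has_derivative
      (\<lambda>v. matrix_inv (snd x) ** snd (DY v) + (- (matrix_inv (snd x) ** snd v ** matrix_inv (snd x))) ** snd (Y x))) (at x)"
    by (rule has_derivative_mm[OF has_derivative_minv_comp[OF has_derivative_snd[OF has_derivative_ident] d1(2)]
        has_derivative_snd[OF assms(2)]])
  have "((\<lambda>q. (matrix_inv (fst q) ** fst (Y q), matrix_inv (snd q) ** snd (Y q))) has_derivative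
      (\<lambda>v. (matrix_inv (fst x) ** fst (DY v) + (- (matrix_inv (fst x) ** fst v ** matrix_inv (fst x))) ** fst (Y x),
            matrix_inv (snd x) ** snd (DY v) + (- (matrix_inv (snd x) ** snd v ** matrix_inv (snd x))) ** snd (Y x)))) (at x)"
    by (rule has_derivative_Pair[OF a b])
  thus ?thesis by (simp add: lt_def Dlt_def add.commute)
qed


definition sg :: "nat \<Rightarrow> real" where "sg k = (if k = 1 then -1 else 1)"
lemma sg_sq: "sg k * sg k = 1" by (simp add: sg_def)
lemma sg_nz: "sg k \<noteq> 0" by (simp add: sg_def)

definition mH :: mat2 where "mH = (\<chi> i j. if i = j then (if i = 1 then 1 else -1) else 0)"
definition mX :: mat2 where "mX = (\<chi> i j. if i = 1 \<and> j = 2 then 1 else 0)"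
definition mY :: mat2 where "mY = (\<chi> i j. if i = 2 \<and> j = 1 then 1 else 0)"

definition B6 :: "pt list" where
  "B6 = [(mH,0),(mX,0),(mY,0),(0,mH),(0,mX),(0,mY)]"

lemma sl2_decomp: "trace (x::mat2) = 0 \<Longrightarrow> x = (x$1$1) *\<^sub>R mH + (x$1$2) *\<^sub>R mX + (x$2$1) *\<^sub>R mY"
  by (simp add: mat2_eq_iff mH_def mX_def mY_def trace2)

lemma galg_span_B6: "galg \<subseteq> span (set B6)"
proof
  fix u assume u: "u \<in> galg"
  hence t: "trace (fst u) = 0" "trace (snd u) = 0" by (auto simp: galg_iff)
  have eq: "u = ((fst u$1$1) *\<^sub>R (mH,0) + (fst u$1$2) *\<^sub>R (mX,0) + (fst u$2$1) *\<^sub>R (mY,0))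
     + ((snd u$1$1) *\<^sub>R (0,mH) + (snd u$1$2) *\<^sub>R (0,mX) + (snd u$2$1) *\<^sub>R (0,mY))"
    using sl2_decomp[OF t(1)] sl2_decomp[OF t(2)] by (simp add: prod_eq_iff)
  show "u \<in> span (set B6)"
    by (subst eq) (unfold B6_def, intro span_add span_scale span_base; simp)
qed

lemma card_B6: "card (set B6) \<le> 6"
  using card_length[of B6] by (simp add: B6_def)

lemma Jp_galg: "u \<in> galg \<Longrightarrow> Jp u \<in> galg"
  by (simp add: galg_iff Jp_def tralg)

lemma neq_by: "gL a t \<noteq> gL b t \<Longrightarrow> a \<noteq> b" by auto

lemma orth7:
  fixes e :: "nat \<Rightarrow> pt"
  assumes E: "\<And>k. k \<in> {1,2,3} \<Longrightarrow> e k \<in> galg"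
    and O: "\<And>i j. i \<in> {1,2,3} \<Longrightarrow> j \<in> {1,2,3} \<Longrightarrow> gL (e i) (e j) = (if i = j then sg i else 0)"
    and X: "\<And>i j. i \<in> {1,2,3} \<Longrightarrow> j \<in> {1,2,3} \<Longrightarrow> gL (e i) (Jp (e j)) = 0"
    and r: "r \<in> galg" "\<And>l. l \<in> {1,2,3} \<Longrightarrow> gL r (e l) = 0" "\<And>l. l \<in> {1,2,3} \<Longrightarrow> gL r (Jp (e l)) = 0"
  shows "r = 0"
proof (rule ccontr)
  assume rnz: "r \<noteq> 0"
  have OJ: "\<And>i j. i \<in> {1,2,3} \<Longrightarrow> j \<in> {1,2,3} \<Longrightarrow> gL (Jp (e i)) (Jp (e j)) = (if i = j then sg i else 0)"
    by (simp add: gL_Jp O)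
  have XJ: "\<And>i j. i \<in> {1,2,3} \<Longrightarrow> j \<in> {1,2,3} \<Longrightarrow> gL (Jp (e i)) (e j) = 0"
    using X by (simp add: gL_sym)
  let ?T = "{e 1, e 2, e 3, Jp (e 1), Jp (e 2), Jp (e 3), r}"
  have d1: "e i \<noteq> e j" if "i \<in> {1,2,3}" "j \<in> {1,2,3}" "i \<noteq> j" for i j
    by (rule neq_by[where t="e i"]) (use that in \<open>simp add: O sg_nz\<close>)
  have d2: "e i \<noteq> Jp (e j)" if "i \<in> {1,2,3}" "j \<in> {1,2,3}" for i j
    by (rule neq_by[where t="e i"]) (use that in \<open>simp add: O XJ sg_nz\<close>)
  have d3: "Jp (e i) \<noteq> Jp (e j)" if "i \<in> {1,2,3}" "j \<in> {1,2,3}" "i \<noteq> j" for i j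
    by (rule neq_by[where t="Jp (e i)"]) (use that in \<open>simp add: OJ sg_nz\<close>)
  have d4: "e i \<noteq> r" if "i \<in> {1,2,3}" for i
    by (rule neq_by[where t="e i"]) (use that in \<open>simp add: O r sg_nz\<close>)
  have d5: "Jp (e i) \<noteq> r" if "i \<in> {1,2,3}" for i
    by (rule neq_by[where t="Jp (e i)"]) (use that in \<open>simp add: OJ r sg_nz\<close>)
  have cardT: "card ?T = 7"
    using d1 d2 d3 d4 d5 by simp
  have fin: "finite ?T" by simp
  have JE: "Jp (e k) \<in> galg" if "k \<in> {1,2,3}" for k using E[OF that] Jp_galg by blast
  have TS: "?T \<subseteq> span (set B6)"
    using galg_span_B6 E JE r(1) by auto
  have ind: "independent ?T"
  proof (rule independent_if_scalars_zero[OF fin])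
    fix f x assume s: "(\<Sum>x\<in>?T. f x *\<^sub>R x) = 0" and x: "x \<in> ?T"
    have c1: "f (e l) = 0" if l: "l \<in> {1,2,3}" for l
    proof -
      have rl: "gL r (e l) = 0" using r(2) l by blast
      have z: "\<forall>v\<in>?T - {e l}. gL v (e l) = 0"
        using l rl by (auto simp: O XJ)
      have "0 = gL (\<Sum>x\<in>?T. f x *\<^sub>R x) (e l)" by (simp only: s gL_zero_l)
      also have "\<dots> = (\<Sum>x\<in>?T. f x * gL x (e l))" by (simp add: gL_sum_l gLalg)
      also have "\<dots> = f (e l) * gL (e l) (e l) + (\<Sum>x\<in>?T - {e l}. f x * gL x (e l))"
        by (rule sum.remove[OF fin]) (use l in auto)
      also have "\<dots> = f (e l) * sg l" using z l by (simp add: O)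
      finally show ?thesis using sg_nz by simp
    qed
    have c2: "f (Jp (e l)) = 0" if l: "l \<in> {1,2,3}" for l
    proof -
      have rl: "gL r (Jp (e l)) = 0" using r(3) l by blast
      have z: "\<forall>v\<in>?T - {Jp (e l)}. gL v (Jp (e l)) = 0"
        using l rl by (auto simp: OJ X)
      have "0 = gL (\<Sum>x\<in>?T. f x *\<^sub>R x) (Jp (e l))" by (simp only: s gL_zero_l)
      also have "\<dots> = (\<Sum>x\<in>?T. f x * gL x (Jp (e l)))" by (simp add: gL_sum_l gLalg)
      also have "\<dots> = f (Jp (e l)) * gL (Jp (e l)) (Jp (e l)) + (\<Sum>x\<in>?T - {Jp (e l)}. f x * gL x (Jp (e l)))"
        by (rule sum.remove[OF fin]) (use l in auto)
      also have "\<dots> = f (Jp (e l)) * sg l" using z l by (simp add: OJ)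
      finally show ?thesis using sg_nz by simp
    qed
    have "(\<Sum>x\<in>?T. f x *\<^sub>R x) = f r *\<^sub>R r + (\<Sum>x\<in>?T - {r}. f x *\<^sub>R x)"
      by (rule sum.remove[OF fin]) auto
    also have "(\<Sum>x\<in>?T - {r}. f x *\<^sub>R x) = 0"
      by (rule sum.neutral) (use c1 c2 in auto)
    finally have "f r = 0" using s rnz by simp
    thus "f x = 0" using x c1 c2 by auto
  qed
  have "card ?T \<le> card (set B6)" using independent_span_bound[OF _ ind TS] by simp
  thus False using cardT card_B6 by simp
qed

lemma sum3: "(\<Sum>k\<in>{1,2,3::nat}. f k) = f 1 + f 2 + f 3" by (simp add: add.assoc)

lemma coord_galg:
  fixes e :: "nat \<Rightarrow> pt"
  assumes E: "\<And>k. k \<in> {1,2,3} \<Longrightarrow> e k \<in> galg"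
    and O: "\<And>i j. i \<in> {1,2,3} \<Longrightarrow> j \<in> {1,2,3} \<Longrightarrow> gL (e i) (e j) = (if i = j then sg i else 0)"
    and X: "\<And>i j. i \<in> {1,2,3} \<Longrightarrow> j \<in> {1,2,3} \<Longrightarrow> gL (e i) (Jp (e j)) = 0"
    and w: "w \<in> galg"
  shows "w = (\<Sum>k\<in>{1,2,3}. (sg k * gL w (e k)) *\<^sub>R e k) + (\<Sum>k\<in>{1,2,3}. (sg k * gL w (Jp (e k))) *\<^sub>R Jp (e k))"
proof -
  let ?R = "(\<Sum>k\<in>{1,2,3}. (sg k * gL w (e k)) *\<^sub>R e k) + (\<Sum>k\<in>{1,2,3}. (sg k * gL w (Jp (e k))) *\<^sub>R Jp (e k))"
  have OJ: "\<And>i j. i \<in> {1,2,3} \<Longrightarrow> j \<in> {1,2,3} \<Longrightarrow> gL (Jp (e i)) (Jp (e j)) = (if i = j then sg i else 0)"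
    by (simp add: gL_Jp O)
  have XJ: "\<And>i j. i \<in> {1,2,3} \<Longrightarrow> j \<in> {1,2,3} \<Longrightarrow> gL (Jp (e i)) (e j) = 0"
    using X by (simp add: gL_sym)
  have JE: "Jp (e k) \<in> galg" if "k \<in> {1,2,3}" for k using E[OF that] Jp_galg by blast
  have Rg: "?R \<in> galg"
    unfolding sum3 using E JE by (intro galg_add galg_scaleR; simp)
  show ?thesis
  proof (rule eq_iff_diff_eq_0[THEN iffD2], rule orth7[of e])
    show "w - ?R \<in> galg" using w Rg galg_diff by blast
    fix l assume l: "l \<in> {1,2,3::nat}"
    show "gL (w - ?R) (e l) = 0"
      using l unfolding sum3 by (auto simp: gLalg O XJ sg_def)
    show "gL (w - ?R) (Jp (e l)) = 0"
      using l unfolding sum3 by (auto simp: gLalg OJ X sg_def)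
  qed (use E O X in auto)
qed


lemma lt_JN: "inN p \<Longrightarrow> lt p (JN p v) = Jp (lt p v)" by (simp add: JN_eq lt_lmul)
lemma lt_PN: "inN p \<Longrightarrow> lt p (PN p v) = Pp (lt p v)" by (simp add: PN_eq lt_lmul)

lemma JN_add: "JN p (v + w) = JN p v + JN p w" by (simp add: JN_eq ltalg Jp_add)
lemma JN_scaleR: "JN p (r *\<^sub>R v) = r *\<^sub>R JN p v" by (simp add: JN_eq ltalg Jp_scaleR)
lemma JN_diff: "JN p (v - w) = JN p v - JN p w" by (simp add: JN_eq ltalg Jp_diff)
lemma JN_uminus: "JN p (- v) = - JN p v" by (simp add: JN_eq ltalg Jp_uminus)
lemma PN_add: "PN p (v + w) = PN p v + PN p w" by (simp add: PN_eq ltalg Pp_add)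
lemma PN_scaleR: "PN p (r *\<^sub>R v) = r *\<^sub>R PN p v" by (simp add: PN_eq ltalg Pp_scaleR)

lemma JN_JN: "inN p \<Longrightarrow> JN p (JN p v) = - v"
  by (simp add: JN_eq lt_lmul Jp_Jp ltalg lmul_lt)
lemma gN_JN: "inN p \<Longrightarrow> gN p (JN p v) (JN p w) = gN p v w"
  by (simp add: gN_def lt_JN gL_Jp)
lemma gN_PN: "inN p \<Longrightarrow> gN p (PN p v) w = gN p v (PN p w)"
  by (simp add: gN_def lt_PN gL_Pp)
lemma PN_JN: "inN p \<Longrightarrow> PN p (JN p v) = - JN p (PN p v)"
  by (simp add: PN_eq JN_eq lt_lmul Pp_Jp ltalg)

lemma gN_sym: "gN p v w = gN p w v" by (simp add: gN_def gL_sym)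
lemma gN_add_l: "gN p (a + b) c = gN p a c + gN p b c" by (simp add: gN_def ltalg gLalg)
lemma gN_add_r: "gN p c (a + b) = gN p c a + gN p c b" by (simp add: gN_def ltalg gLalg)
lemma gN_diff_l: "gN p (a - b) c = gN p a c - gN p b c" by (simp add: gN_def ltalg gLalg)
lemma gN_diff_r: "gN p c (a - b) = gN p c a - gN p c b" by (simp add: gN_def ltalg gLalg)
lemma gN_scaleR_l: "gN p (r *\<^sub>R a) c = r * gN p a c" by (simp add: gN_def ltalg gLalg)
lemma gN_scaleR_r: "gN p c (r *\<^sub>R a) = r * gN p c a" by (simp add: gN_def ltalg gLalg)
lemma gN_uminus_l: "gN p (- a) c = - gN p a c" by (simp add: gN_def ltalg gLalg)
lemma gN_uminus_r: "gN p c (- a) = - gN p c a" by (simp add: gN_def ltalg gLalg)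
lemma gN_zero_l: "gN p 0 c = 0" by (simp add: gN_def ltalg gLalg)
lemma gN_zero_r: "gN p c 0 = 0" by (simp add: gN_def ltalg gLalg)
lemmas gNalg = gN_add_l gN_add_r gN_diff_l gN_diff_r gN_scaleR_l gN_scaleR_r gN_uminus_l gN_uminus_r
  gN_zero_l gN_zero_r

lemma lmul_sum: "lmul p (\<Sum>k\<in>S. f k) = (\<Sum>k\<in>S. lmul p (f k))"
  by (induction S rule: infinite_finite_induct) (auto simp: ltalg)
lemma lt_sum: "lt p (\<Sum>k\<in>S. f k) = (\<Sum>k\<in>S. lt p (f k))"
  by (induction S rule: infinite_finite_induct) (auto simp: ltalg)

lemma Pp_galg: "u \<in> galg \<Longrightarrow> Pp u \<in> galg" by (simp add: galg_iff Pp_def)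

lemma TM_scaleR: assumes "v \<in> TM M p" shows "r *\<^sub>R v \<in> TM M p"
proof -
  obtain \<gamma> where g: "\<gamma> 0 = p" "range \<gamma> \<subseteq> M" "(\<gamma> has_vector_derivative v) (at 0)"
    using assms by (auto simp: TM_def)
  have f: "((\<lambda>t::real. r * t) has_vector_derivative r) (at 0)"
    using has_real_derivative_iff_has_vector_derivative[THEN iffD1, OF DERIV_cmult_Id] by simp
  have "((\<gamma> \<circ> (\<lambda>t. r * t)) has_vector_derivative r *\<^sub>R v) (at 0)"
    by (rule vector_diff_chain_at[OF f]) (use g in simp)
  moreover have "(\<gamma> \<circ> (\<lambda>t. r * t)) 0 = p" using g by simp
  moreover have "range (\<gamma> \<circ> (\<lambda>t. r * t)) \<subseteq> M" using g by auto
  ultimately show ?thesis unfolding TM_def by blast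
qed

lemma TM_linmap: assumes "v \<in> TM M p" "bounded_linear f" "f ` M \<subseteq> M'"
  shows "f v \<in> TM M' (f p)"
proof -
  obtain \<gamma> where g: "\<gamma> 0 = p" "range \<gamma> \<subseteq> M" "(\<gamma> has_vector_derivative v) (at 0)"
    using assms by (auto simp: TM_def)
  have "((\<lambda>t. f (\<gamma> t)) has_vector_derivative f v) (at 0)"
    by (rule bounded_linear.has_vector_derivative[OF assms(2) g(3)])
  moreover have "range (\<lambda>t. f (\<gamma> t)) \<subseteq> M'" using g assms(3) by auto
  ultimately show ?thesis unfolding TM_def using g(1) by (intro CollectI exI[of _ "\<lambda>t. f (\<gamma> t)"]) auto
qed

lemma sum_single: assumes "finite S" "i \<in> S" "\<And>k. k \<in> S \<Longrightarrow> k \<noteq> i \<Longrightarrow> f k = 0"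
  shows "sum f S = f i"
proof -
  have "sum f S = f i + sum f (S - {i})" by (rule sum.remove[OF assms(1,2)])
  also have "sum f (S - {i}) = 0" by (rule sum.neutral) (use assms(3) in auto)
  finally show ?thesis by simp
qed

definition Qd :: "pt set \<Rightarrow> pt \<Rightarrow> pt \<Rightarrow> pt \<times> pt \<Rightarrow> bool" where
  "Qd M p v xy \<longleftrightarrow> fst xy \<in> TM M p \<and> snd xy \<in> TM M p \<and> PN p v = fst xy + JN p (snd xy)"

lemma AB_Qd: "AB M p v = (THE xy. Qd M p v xy)" by (simp add: AB_def Qd_def)

lemma AB_none: "\<not> (\<exists>xy. Qd M p v xy) \<Longrightarrow> AB M p v = The (\<lambda>_. False)"
proof -
  assume "\<not> (\<exists>xy. Qd M p v xy)"
  hence "Qd M p v = (\<lambda>_. False)" by auto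
  thus ?thesis by (simp add: AB_Qd)
qed


locale LS =
  fixes M :: "pt set" and E :: "nat \<Rightarrow> pt \<Rightarrow> pt" and \<theta> :: "nat \<Rightarrow> pt \<Rightarrow> real"
  assumes lag: "lagrangian M"
    and frame: "\<And>p. p \<in> M \<Longrightarrow> Delta1_frame M p (\<lambda>i. E i p) \<and> typeI M p (\<lambda>i. E i p) (\<lambda>i. \<theta> i p)"
begin

lemma inN: "p \<in> M \<Longrightarrow> inN p"
  using lag NN_inN unfolding lagrangian_def by blast

lemma J_normal: "p \<in> M \<Longrightarrow> w \<in> TM M p \<Longrightarrow> JN p w \<in> normal_space M p"
proof -
  assume "p \<in> M" "w \<in> TM M p"
  moreover have "\<forall>p\<in>M. JN p ` TM M p = normal_space M p" using lag unfolding lagrangian_def by blast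
  ultimately show ?thesis by blast
qed

lemma TM_J_orth: "p \<in> M \<Longrightarrow> v \<in> TM M p \<Longrightarrow> w \<in> TM M p \<Longrightarrow> gN p v (JN p w) = 0"
proof -
  assume a: "p \<in> M" "v \<in> TM M p" "w \<in> TM M p"
  have "JN p w \<in> normal_space M p" by (rule J_normal[OF a(1,3)])
  thus ?thesis using a(2) unfolding normal_space_def by blast
qed

lemma TM_TN: assumes "p \<in> M" "v \<in> TM M p" shows "lt p v \<in> galg"
proof -
  have "JN p v \<in> normal_space M p" by (rule J_normal[OF assms])
  hence "lt p (JN p v) \<in> galg" by (simp add: normal_space_def TN_def)
  hence "Jp (lt p v) \<in> galg" using lt_JN inN[OF assms(1)] by simp
  hence "Jp (Jp (lt p v)) \<in> galg" by (rule Jp_galg)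
  thus ?thesis by (simp add: Jp_Jp galg_uminus[of "- lt p v", simplified])
qed

lemma E_TM: "p \<in> M \<Longrightarrow> k \<in> {1,2,3} \<Longrightarrow> E k p \<in> TM M p"
proof -
  assume a: "p \<in> M" "k \<in> {1,2,3}"
  have "Delta1_frame M p (\<lambda>i. E i p)" using frame[OF a(1)] by blast
  thus ?thesis using a(2) unfolding Delta1_frame_def by blast
qed

lemma E_orth: "p \<in> M \<Longrightarrow> i \<in> {1,2,3} \<Longrightarrow> j \<in> {1,2,3} \<Longrightarrow> gN p (E i p) (E j p) = (if i = j then sg i else 0)"
proof -
  assume a: "p \<in> M" "i \<in> {1,2,3}" "j \<in> {1,2,3}"
  have "Delta1_frame M p (\<lambda>i. E i p)" using frame[OF a(1)] by blast
  hence "gN p (E i p) (E j p) = (if i = j then (if i = 1 then -1 else 1) else 0)"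
    using a(2,3) unfolding Delta1_frame_def by blast
  thus ?thesis by (simp add: sg_def)
qed

lemma coordN: assumes p: "p \<in> M" and w: "lt p w \<in> galg"
  shows "w = (\<Sum>k\<in>{1,2,3}. (sg k * gN p w (E k p)) *\<^sub>R E k p) + (\<Sum>k\<in>{1,2,3}. (sg k * gN p w (JN p (E k p))) *\<^sub>R JN p (E k p))"
proof -
  have n: "inN p" using inN p by blast
  have c: "lt p w = (\<Sum>k\<in>{1,2,3}. (sg k * gL (lt p w) (lt p (E k p))) *\<^sub>R lt p (E k p)) + (\<Sum>k\<in>{1,2,3}. (sg k * gL (lt p w) (Jp (lt p (E k p)))) *\<^sub>R Jp (lt p (E k p)))"
  proof (rule coord_galg[of "\<lambda>k. lt p (E k p)"])
    show "\<And>k. k \<in> {1, 2, 3} \<Longrightarrow> lt p (E k p) \<in> galg" using TM_TN E_TM p by blast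
    show "\<And>i j. i \<in> {1, 2, 3} \<Longrightarrow> j \<in> {1, 2, 3} \<Longrightarrow> gL (lt p (E i p)) (lt p (E j p)) = (if i = j then sg i else 0)"
      using E_orth[OF p] by (simp add: gN_def)
    show "\<And>i j. i \<in> {1, 2, 3} \<Longrightarrow> j \<in> {1, 2, 3} \<Longrightarrow> gL (lt p (E i p)) (Jp (lt p (E j p))) = 0"
      using TM_J_orth[OF p] E_TM[OF p] n by (simp add: gN_def lt_JN)
  qed (rule w)
  have "w = lmul p (lt p w)" using n by (simp add: lmul_lt)
  also have "\<dots> = (\<Sum>k\<in>{1,2,3}. (sg k * gN p w (E k p)) *\<^sub>R E k p) + (\<Sum>k\<in>{1,2,3}. (sg k * gN p w (JN p (E k p))) *\<^sub>R JN p (E k p))"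
  proof -
    have r1: "\<And>x. lmul p (lt p x) = x" using n by (simp add: lmul_lt)
    have r2: "\<And>x. lmul p (Jp (lt p x)) = JN p x" by (simp add: JN_eq)
    have r3: "\<And>x. gL (lt p w) (lt p x) = gN p w x" by (simp add: gN_def)
    have r4: "\<And>x. gL (lt p w) (Jp (lt p x)) = gN p w (JN p x)" using n by (simp add: gN_def lt_JN)
    show ?thesis by (subst c) (simp only: lmul_add lmul_sum lmul_scaleR r1 r2 r3 r4)
  qed
  finally show ?thesis .
qed

lemma TM_span: assumes p: "p \<in> M" and v: "v \<in> TM M p"
  shows "v = (\<Sum>k\<in>{1,2,3}. (sg k * gN p v (E k p)) *\<^sub>R E k p)"
proof -
  have z: "\<forall>k\<in>{1,2,3}. gN p v (JN p (E k p)) = 0" using TM_J_orth[OF p v] E_TM[OF p] by blast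
  have B0: "(\<Sum>k\<in>{1,2,3}. (sg k * gN p v (JN p (E k p))) *\<^sub>R JN p (E k p)) = 0"
    using z by simp
  show ?thesis by (rule trans[OF coordN[OF p TM_TN[OF p v]]]) (simp only: B0 add_0_right)
qed

end


context LS begin

lemma Qd_unique: assumes p: "p \<in> M" and q1: "Qd M p v xy" and q2: "Qd M p v xy'" shows "xy = xy'"
proof -
  obtain x y x' y' where xy: "xy = (x,y)" "xy' = (x',y')" by (cases xy, cases xy')
  have t: "x \<in> TM M p" "y \<in> TM M p" "x' \<in> TM M p" "y' \<in> TM M p" and eq: "x + JN p y = x' + JN p y'"
    using q1 q2 by (auto simp: Qd_def xy)
  have gx: "gN p x (E l p) = gN p x' (E l p)" if l: "l \<in> {1,2,3}" for l
  proof -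
    have "gN p (x + JN p y) (E l p) = gN p (x' + JN p y') (E l p)" using eq by simp
    moreover have "gN p (JN p y) (E l p) = 0" "gN p (JN p y') (E l p) = 0"
      using TM_J_orth[OF p E_TM[OF p l]] t by (simp_all add: gN_sym)
    ultimately show ?thesis by (simp add: gNalg)
  qed
  have "x = x'"
  proof -
    have "x = (\<Sum>k\<in>{1,2,3}. (sg k * gN p x (E k p)) *\<^sub>R E k p)" by (rule TM_span[OF p t(1)])
    also have "\<dots> = (\<Sum>k\<in>{1,2,3}. (sg k * gN p x' (E k p)) *\<^sub>R E k p)"
      by (rule sum.cong) (simp_all add: gx)
    also have "\<dots> = x'" by (rule TM_span[OF p t(3), symmetric])
    finally show ?thesis .
  qed
  hence "JN p y = JN p y'" using eq by simp
  hence "JN p (JN p y) = JN p (JN p y')" by simp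
  hence "y = y'" using JN_JN inN[OF p] by simp
  thus ?thesis using \<open>x = x'\<close> xy by simp
qed

lemma AB_eq: "p \<in> M \<Longrightarrow> Qd M p v xy \<Longrightarrow> AB M p v = xy"
  unfolding AB_Qd by (rule the_equality) (auto intro: Qd_unique)

lemma cs_E: "p \<in> M \<Longrightarrow> i \<in> {1,2,3} \<Longrightarrow> opA M p (E i p) = cos (2 * \<theta> i p) *\<^sub>R E i p \<and> opB M p (E i p) = sin (2 * \<theta> i p) *\<^sub>R E i p"
proof -
  assume a: "p \<in> M" "i \<in> {1,2,3}"
  have "typeI M p (\<lambda>i. E i p) (\<lambda>i. \<theta> i p)" using frame[OF a(1)] by blast
  thus ?thesis using a(2) unfolding typeI_def by blast
qed

lemma PE: assumes p: "p \<in> M" and i: "i \<in> {1,2,3}"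
  shows "PN p (E i p) = cos (2 * \<theta> i p) *\<^sub>R E i p + JN p (sin (2 * \<theta> i p) *\<^sub>R E i p)"
proof -
  have n: "inN p" using inN[OF p] .
  define c where "c k = cos (2 * \<theta> k p)" for k
  define s where "s k = sin (2 * \<theta> k p)" for k
  have good_imp: "PN p (E k p) = c k *\<^sub>R E k p + JN p (s k *\<^sub>R E k p)"
    if k: "k \<in> {1,2,3}" and g: "\<exists>xy. Qd M p (E k p) xy" for k
  proof -
    obtain xy where q: "Qd M p (E k p) xy" using g by blast
    have "AB M p (E k p) = xy" by (rule AB_eq[OF p q])
    moreover have "fst (AB M p (E k p)) = c k *\<^sub>R E k p" "snd (AB M p (E k p)) = s k *\<^sub>R E k p"
      using cs_E[OF p k] by (simp_all add: opA_def opB_def c_def s_def)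
    ultimately show ?thesis using q by (simp add: Qd_def)
  qed
  have all_good: "\<exists>xy. Qd M p (E i p) xy"
  proof (rule ccontr)
    assume bad: "\<not> (\<exists>xy. Qd M p (E i p) xy)"
    have c0: "fst (The (\<lambda>_::pt\<times>pt. False)) = c i *\<^sub>R E i p" "snd (The (\<lambda>_::pt\<times>pt. False)) = s i *\<^sub>R E i p"
      using cs_E[OF p i] AB_none[OF bad] by (simp_all add: opA_def opB_def c_def s_def)
    have others: "\<exists>xy. Qd M p (E j p) xy" if j: "j \<in> {1,2,3}" "j \<noteq> i" for j
    proof (rule ccontr)
      assume bad2: "\<not> (\<exists>xy. Qd M p (E j p) xy)"
      have "fst (The (\<lambda>_::pt\<times>pt. False)) = c j *\<^sub>R E j p" "snd (The (\<lambda>_::pt\<times>pt. False)) = s j *\<^sub>R E j p"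
        using cs_E[OF p j(1)] AB_none[OF bad2] by (simp_all add: opA_def opB_def c_def s_def)
      hence e1: "c i *\<^sub>R E i p = c j *\<^sub>R E j p" "s i *\<^sub>R E i p = s j *\<^sub>R E j p" using c0 by simp_all
      have "gN p (c i *\<^sub>R E i p) (E i p) = gN p (c j *\<^sub>R E j p) (E i p)"
           "gN p (s i *\<^sub>R E i p) (E i p) = gN p (s j *\<^sub>R E j p) (E i p)" using e1 by simp_all
      hence "c i * sg i = 0" "s i * sg i = 0" using E_orth[OF p] i j by (simp_all add: gNalg)
      hence "c i = 0" "s i = 0" using sg_nz by simp_all
      thus False using sin_cos_squared_add[of "2 * \<theta> i p"] by (simp add: c_def s_def)
    qed
    have PEk: "PN p (E k p) = c k *\<^sub>R E k p + JN p (s k *\<^sub>R E k p)" if "k \<in> {1,2,3}" "k \<noteq> i" for k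
      using good_imp[OF that(1) others[OF that]] .
    have PEi_TN: "lt p (PN p (E i p)) \<in> galg" using n TM_TN[OF p E_TM[OF p i]] by (simp add: lt_PN Pp_galg)
    have a0: "gN p (PN p (E i p)) (E k p) = 0" if k: "k \<in> {1,2,3}" "k \<noteq> i" for k
    proof -
      have "gN p (PN p (E i p)) (E k p) = gN p (E i p) (PN p (E k p))" using n by (simp add: gN_PN)
      also have "\<dots> = c k * gN p (E i p) (E k p) + gN p (E i p) (JN p (s k *\<^sub>R E k p))"
        by (simp add: PEk[OF k] gNalg)
      also have "\<dots> = 0"
        using E_orth[OF p i k(1)] k(2) TM_J_orth[OF p E_TM[OF p i] TM_scaleR[OF E_TM[OF p k(1)]]] by simp
      finally show ?thesis .
    qed
    have b0: "gN p (PN p (E i p)) (JN p (E k p)) = 0" if k: "k \<in> {1,2,3}" "k \<noteq> i" for k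
    proof -
      have "gN p (PN p (E i p)) (JN p (E k p)) = gN p (E i p) (PN p (JN p (E k p)))" using n by (simp add: gN_PN)
      also have "\<dots> = - gN p (E i p) (JN p (PN p (E k p)))" using n by (simp add: PN_JN gNalg)
      also have "\<dots> = - (c k * gN p (E i p) (JN p (E k p)) + s k * gN p (E i p) (JN p (JN p (E k p))))"
        by (simp add: PEk[OF k] JN_add JN_scaleR gNalg)
      also have "\<dots> = 0"
        using E_orth[OF p i k(1)] k(2) TM_J_orth[OF p E_TM[OF p i] E_TM[OF p k(1)]] JN_JN[OF n] by (simp add: gNalg)
      finally show ?thesis .
    qed
    define a where "a = sg i * gN p (PN p (E i p)) (E i p)"
    define b where "b = sg i * gN p (PN p (E i p)) (JN p (E i p))"
    have "PN p (E i p) = (\<Sum>k\<in>{1,2,3}. (sg k * gN p (PN p (E i p)) (E k p)) *\<^sub>R E k p) + (\<Sum>k\<in>{1,2,3}. (sg k * gN p (PN p (E i p)) (JN p (E k p))) *\<^sub>R JN p (E k p))"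
      by (rule coordN[OF p PEi_TN])
    also have "(\<Sum>k\<in>{1,2,3}. (sg k * gN p (PN p (E i p)) (E k p)) *\<^sub>R E k p) = a *\<^sub>R E i p"
      unfolding a_def by (rule sum_single) (use i a0 in auto)
    also have "(\<Sum>k\<in>{1,2,3}. (sg k * gN p (PN p (E i p)) (JN p (E k p))) *\<^sub>R JN p (E k p)) = b *\<^sub>R JN p (E i p)"
      unfolding b_def by (rule sum_single) (use i b0 in auto)
    finally have "PN p (E i p) = a *\<^sub>R E i p + JN p (b *\<^sub>R E i p)" by (simp add: JN_scaleR)
    hence "Qd M p (E i p) (a *\<^sub>R E i p, b *\<^sub>R E i p)"
      unfolding Qd_def using TM_scaleR E_TM[OF p i] by simp
    thus False using bad by blast
  qed
  show ?thesis using good_imp[OF i all_good] by (simp add: c_def s_def)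
qed

end


lemma SL2_det: "a \<in> SL2 \<Longrightarrow> det a \<noteq> 0" by (simp add: SL2_def)

lemma bl_phi: "bounded_linear (phi a b c)"
proof -
  have "linear (phi a b c)" by (rule linearI) (simp_all only: phi_add phi_scaleR)
  thus ?thesis using linear_conv_bounded_linear by blast
qed

locale PHI =
  fixes a b c :: mat2
  assumes abc: "a \<in> SL2" "b \<in> SL2" "c \<in> SL2"
begin

abbreviation "f \<equiv> phi a b c"

lemma dets: "det a \<noteq> 0" "det b \<noteq> 0" "det c \<noteq> 0" using abc SL2_det by auto

lemma f_lt: "inN x \<Longrightarrow> lt (f x) (f v) = Ad c (lt x v)" using phi_lt dets by blast
lemma f_inN: "inN x \<Longrightarrow> inN (f x)" using inN_phi dets by blast

lemma f_gN: "inN x \<Longrightarrow> gN (f x) (f v) (f w) = gN x v w"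
  by (simp add: gN_def f_lt gL_Ad dets)

lemma f_lmul: "lmul (f x) (Ad c u) = f (lmul x u)" using phi_lmul dets by blast

lemma f_JN: "inN x \<Longrightarrow> JN (f x) (f v) = f (JN x v)"
  by (simp add: JN_eq f_lt Jp_Ad f_lmul)
lemma f_PN: "inN x \<Longrightarrow> PN (f x) (f v) = f (PN x v)"
  by (simp add: PN_eq f_lt Pp_Ad f_lmul)

end

context LS begin

lemma frame_inv:
  assumes "PHI a b c" and fM: "phi a b c ` M \<subseteq> M" and x: "x \<in> M"
  shows "Delta1_frame M (phi a b c x) (\<lambda>i. phi a b c (E i x)) \<and> typeI M (phi a b c x) (\<lambda>i. phi a b c (E i x)) (\<lambda>i. \<theta> i x)"
proof -
  interpret PHI a b c by fact
  have n: "inN x" by (rule inN[OF x])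
  have q: "f x \<in> M" using fM x by blast
  have fT: "f v \<in> TM M (f x)" if "v \<in> TM M x" for v
    by (rule TM_linmap[OF that bl_phi fM])
  have D: "Delta1_frame M (f x) (\<lambda>i. f (E i x))"
    unfolding Delta1_frame_def
  proof (intro conjI ballI)
    fix i assume i: "i \<in> {1,2,3::nat}"
    show "f (E i x) \<in> TM M (f x)" by (rule fT[OF E_TM[OF x i]])
  next
    fix i j assume i: "i \<in> {1,2,3::nat}" and j: "j \<in> {1,2,3::nat}"
    show "gN (f x) (f (E i x)) (f (E j x)) = (if i = j then (if i = 1 then -1 else 1) else 0)"
      using E_orth[OF x i j] n by (simp add: f_gN sg_def)
  qed
  have T: "opA M (f x) (f (E i x)) = cos (2 * \<theta> i x) *\<^sub>R f (E i x) \<and> opB M (f x) (f (E i x)) = sin (2 * \<theta> i x) *\<^sub>R f (E i x)"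
    if i: "i \<in> {1,2,3}" for i
  proof -
    let ?cs = "(cos (2 * \<theta> i x) *\<^sub>R f (E i x), sin (2 * \<theta> i x) *\<^sub>R f (E i x))"
    have "Qd M (f x) (f (E i x)) ?cs"
      unfolding Qd_def
    proof (intro conjI)
      show "fst ?cs \<in> TM M (f x)" using fT[OF TM_scaleR[OF E_TM[OF x i]]] by (simp add: phi_scaleR)
      show "snd ?cs \<in> TM M (f x)" using fT[OF TM_scaleR[OF E_TM[OF x i]]] by (simp add: phi_scaleR)
      show "PN (f x) (f (E i x)) = fst ?cs + JN (f x) (snd ?cs)"
        using PE[OF x i] n by (simp add: f_PN f_JN phi_add phi_scaleR JN_scaleR)
    qed
    hence "AB M (f x) (f (E i x)) = ?cs" by (rule AB_eq[OF q])
    thus ?thesis by (simp add: opA_def opB_def)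
  qed
  have "\<exists>k::int. \<theta> 1 x + \<theta> 2 x + \<theta> 3 x = of_int k * pi"
    using frame[OF x] unfolding typeI_def by blast
  thus ?thesis using D T unfolding typeI_def by blast
qed

end


lemma G0_add_r: "G0 u (w + w') = G0 u w + G0 u w'"
  by (simp add: G0_def comm_def mmalg algebra_simps)

lemma bb_gL: "bounded_bilinear gL"
proof -
  have "bilinear gL" unfolding bilinear_def
    by (intro conjI allI linearI) (simp_all only: gLalg real_scaleR_def)
  thus ?thesis using bilinear_conv_bounded_bilinear by blast
qed

lemma bb_G0: "bounded_bilinear G0"
proof -
  have "bilinear G0" unfolding bilinear_def
    by (intro conjI allI linearI) (simp_all only: G0_add_l G0_add_r G0_scaleR_l G0_scaleR_r)
  thus ?thesis using bilinear_conv_bounded_bilinear by blast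
qed

lemma bl_Jp: "bounded_linear Jp"
proof -
  have "linear Jp" by (rule linearI) (simp_all only: Jp_add Jp_scaleR)
  thus ?thesis using linear_conv_bounded_linear by blast
qed
lemma bl_Pp: "bounded_linear Pp"
proof -
  have "linear Pp" by (rule linearI) (simp_all only: Pp_add Pp_scaleR)
  thus ?thesis using linear_conv_bounded_linear by blast
qed
lemma bl_Ad: "bounded_linear (Ad c)"
proof -
  have "linear (Ad c)" by (rule linearI) (simp_all only: Ad_add Ad_scaleR)
  thus ?thesis using linear_conv_bounded_linear by blast
qed

lemma cont_mm: "continuous_on S f \<Longrightarrow> continuous_on S g \<Longrightarrow> continuous_on S (\<lambda>x. (f x :: mat2) ** (g x :: mat2))"
  using bounded_bilinear.continuous_on[OF bb_mm] by blast

lemma cont_minv_comp: "continuous_on S g \<Longrightarrow> (\<forall>x\<in>S. det (g x :: mat2) \<noteq> 0) \<Longrightarrow> continuous_on S (\<lambda>x. matrix_inv (g x))"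
  by (rule continuous_on_compose2[OF cont_minv]) auto

lemma cont_lt: assumes "continuous_on S g" "continuous_on S h" "\<forall>x\<in>S. inN (g x)"
  shows "continuous_on S (\<lambda>x. lt (g x) (h x))"
proof -
  have "continuous_on S (\<lambda>x. matrix_inv (fst (g x)))" "continuous_on S (\<lambda>x. matrix_inv (snd (g x)))"
    using assms by (auto intro!: cont_minv_comp continuous_intros simp: inN_def)
  thus ?thesis unfolding lt_def using assms by (intro continuous_intros cont_mm) auto
qed

lemma cont_lmul: assumes "continuous_on S g" "continuous_on S h"
  shows "continuous_on S (\<lambda>x. lmul (g x) (h x))"
  unfolding lmul_def using assms by (intro continuous_intros cont_mm) auto

lemma cont_Dlt: assumes "continuous_on S g" "continuous_on S y" "continuous_on S dy" "continuous_on S v" "\<forall>x\<in>S. inN (g x)"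
  shows "continuous_on S (\<lambda>x. Dlt (g x) (y x) (dy x) (v x))"
proof -
  have "continuous_on S (\<lambda>x. matrix_inv (fst (g x)))" "continuous_on S (\<lambda>x. matrix_inv (snd (g x)))"
    using assms by (auto intro!: cont_minv_comp continuous_intros simp: inN_def)
  thus ?thesis unfolding Dlt_def using assms by (intro continuous_intros cont_mm) auto
qed

lemma cont_gL: "continuous_on S f \<Longrightarrow> continuous_on S g \<Longrightarrow> continuous_on S (\<lambda>x. gL (f x) (g x))"
  using bounded_bilinear.continuous_on[OF bb_gL] by blast
lemma cont_G0: "continuous_on S f \<Longrightarrow> continuous_on S g \<Longrightarrow> continuous_on S (\<lambda>x. G0 (f x) (g x))"
  using bounded_bilinear.continuous_on[OF bb_G0] by blast

lemma cont_lin_apply: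
  fixes D :: "'a::euclidean_space \<Rightarrow> 'b::euclidean_space \<Rightarrow> 'c::real_normed_vector"
  assumes "\<And>v. continuous_on S (\<lambda>x. D x v)" "\<And>x. x \<in> S \<Longrightarrow> linear (D x)" "continuous_on S g"
  shows "continuous_on S (\<lambda>x. D x (g x))"
proof -
  have eq: "D x (g x) = (\<Sum>b\<in>Basis. (g x \<bullet> b) *\<^sub>R D x b)" if "x \<in> S" for x
  proof -
    have "D x (g x) = D x (\<Sum>b\<in>Basis. (g x \<bullet> b) *\<^sub>R b)" by (simp add: euclidean_representation)
    also have "\<dots> = (\<Sum>b\<in>Basis. (g x \<bullet> b) *\<^sub>R D x b)"
      using assms(2)[OF that] by (simp add: linear_sum linear_scale)
    finally show ?thesis .
  qed
  have "continuous_on S (\<lambda>x. \<Sum>b\<in>Basis. (g x \<bullet> b) *\<^sub>R D x b)"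
    using assms(1,3) by (intro continuous_intros) auto
  thus ?thesis by (rule continuous_on_eq) (simp add: eq)
qed

lemma chain_vd:
  assumes g: "(\<gamma> has_vector_derivative v) (at 0)" and F: "(F has_derivative D) (at (\<gamma> 0))"
  shows "((\<lambda>t. F (\<gamma> t)) has_vector_derivative D v) (at 0)"
proof -
  have "(\<gamma> has_derivative (\<lambda>t. t *\<^sub>R v)) (at 0)" using g by (simp add: has_vector_derivative_def)
  from has_derivative_compose[OF this F]
  have "((\<lambda>t. F (\<gamma> t)) has_derivative (\<lambda>t. D (t *\<^sub>R v))) (at 0)" .
  moreover have "(\<lambda>t. D (t *\<^sub>R v)) = (\<lambda>t. t *\<^sub>R D v)"
    using has_derivative_bounded_linear[OF F] by (simp add: linear_scale bounded_linear.linear)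
  ultimately show ?thesis by (simp add: has_vector_derivative_def)
qed


locale LS2 = LS +
  fixes U :: "pt set"
  assumes conn: "connected M" and Uo: "open U" and MU: "M \<subseteq> U"
    and sm: "\<And>i. i \<in> {1,2,3} \<Longrightarrow> smooth_on (E i) U"
    and uniq: "\<forall>p\<in>M. \<forall>e \<psi>. Delta1_frame M p e \<and> typeI M p e \<psi> \<longrightarrow>
           (\<forall>i\<in>{1,2,3}. \<exists>j\<in>{1,2,3}. e i = E j p \<or> e i = - E j p)"
begin

lemma E_cont: "i \<in> {1,2,3} \<Longrightarrow> continuous_on U (E i)"
proof -
  assume i: "i \<in> {1,2,3}"
  have "Ck_on 0 (E i) U" using sm[OF i] unfolding smooth_on_def by blast
  thus ?thesis by simp
qed

lemma E_C1: "i \<in> {1,2,3} \<Longrightarrow> (\<forall>x\<in>U. E i differentiable (at x)) \<and> (\<forall>v. continuous_on U (\<lambda>x. frechet_derivative (E i) (at x) v))"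
proof -
  assume i: "i \<in> {1,2,3}"
  have "Ck_on (Suc 0) (E i) U" using sm[OF i] unfolding smooth_on_def by blast
  thus ?thesis by simp
qed

lemma E_diff: "i \<in> {1,2,3} \<Longrightarrow> x \<in> U \<Longrightarrow> E i differentiable (at x)"
  using E_C1[THEN conjunct1] by (rule bspec)
lemma E_dcont: "i \<in> {1,2,3} \<Longrightarrow> continuous_on U (\<lambda>x. frechet_derivative (E i) (at x) v)"
  using E_C1[THEN conjunct2] by (rule spec)

definition DF :: "nat \<Rightarrow> pt \<Rightarrow> pt \<Rightarrow> pt" where
  "DF j x v = Dlt x (E j x) (frechet_derivative (E j) (at x) v) v"

lemma FF_deriv: "x \<in> M \<Longrightarrow> j \<in> {1,2,3} \<Longrightarrow> ((\<lambda>q. lt q (E j q)) has_derivative DF j x) (at x)"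
proof -
  assume x: "x \<in> M" and j: "j \<in> {1,2,3}"
  have xU: "x \<in> U" using MU x by blast
  have "(E j has_derivative frechet_derivative (E j) (at x)) (at x)"
    using frechet_derivative_works[THEN iffD1, OF E_diff[OF j xU]] .
  from has_derivative_ltfield[OF inN[OF x] this] show ?thesis unfolding DF_def .
qed

lemma FF_fd: "x \<in> M \<Longrightarrow> j \<in> {1,2,3} \<Longrightarrow> frechet_derivative (\<lambda>q. lt q (E j q)) (at x) = DF j x"
  by (rule frechet_derivative_at[symmetric]) (rule FF_deriv)

lemma DF_linear: "x \<in> M \<Longrightarrow> j \<in> {1,2,3} \<Longrightarrow> linear (DF j x)"
  by (rule has_derivative_linear) (rule FF_deriv)

lemma LC_eq: "x \<in> M \<Longrightarrow> j \<in> {1,2,3} \<Longrightarrow> LC x (E j) v = lmul x (DF j x v + G0 (lt x v) (lt x (E j x)))"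
  by (simp add: LC_def FF_fd Gam_eq)

lemma E_contM: "j \<in> {1,2,3} \<Longrightarrow> continuous_on M (E j)"
  by (rule continuous_on_subset[OF E_cont MU])

lemma FF_cont: "j \<in> {1,2,3} \<Longrightarrow> continuous_on M (\<lambda>x. lt x (E j x))"
proof -
  assume j: "j \<in> {1,2,3}"
  have "\<forall>x\<in>M. inN x" using inN by blast
  thus ?thesis by (intro cont_lt continuous_on_id E_contM[OF j])
qed

lemma pointwise_perm:
  assumes "PHI a b c" "phi a b c ` M \<subseteq> M" "x \<in> M" "i \<in> {1,2,3}"
  shows "\<exists>j\<in>{1,2,3}. phi a b c (E i x) = E j (phi a b c x) \<or> phi a b c (E i x) = - E j (phi a b c x)"
proof -
  have q: "phi a b c x \<in> M" using assms(2,3) by blast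
  have "Delta1_frame M (phi a b c x) (\<lambda>i. phi a b c (E i x)) \<and> typeI M (phi a b c x) (\<lambda>i. phi a b c (E i x)) (\<lambda>i. \<theta> i x)"
    by (rule frame_inv[OF assms(1-3)])
  with uniq q have "\<forall>i\<in>{1,2,3}. \<exists>j\<in>{1,2,3}. phi a b c (E i x) = E j (phi a b c x) \<or> phi a b c (E i x) = - E j (phi a b c x)"
    by blast
  thus ?thesis using assms(4) by blast
qed

end


context LS2 begin

definition cosf :: "nat \<Rightarrow> pt \<Rightarrow> real" where "cosf i x = sg i * gN x (PN x (E i x)) (E i x)"
definition sinf :: "nat \<Rightarrow> pt \<Rightarrow> real" where "sinf i x = sg i * gN x (PN x (E i x)) (JN x (E i x))"

lemma cosf_eq: assumes x: "x \<in> M" and i: "i \<in> {1,2,3}" shows "cosf i x = cos (2 * \<theta> i x)"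
proof -
  have z: "gN x (JN x (sin (2 * \<theta> i x) *\<^sub>R E i x)) (E i x) = 0"
    using TM_J_orth[OF x E_TM[OF x i] TM_scaleR[OF E_TM[OF x i]]] by (simp add: gN_sym)
  show ?thesis unfolding cosf_def PE[OF x i] using z E_orth[OF x i i]
    by (simp add: gNalg sg_def)
qed

lemma sinf_eq: assumes x: "x \<in> M" and i: "i \<in> {1,2,3}" shows "sinf i x = sin (2 * \<theta> i x)"
proof -
  have z: "gN x (E i x) (JN x (E i x)) = 0"
    using TM_J_orth[OF x E_TM[OF x i] E_TM[OF x i]] .
  show ?thesis unfolding sinf_def PE[OF x i] using z E_orth[OF x i i] inN[OF x]
    by (simp add: gNalg sg_def JN_scaleR gN_JN)
qed

lemma cosf_cont: "i \<in> {1,2,3} \<Longrightarrow> continuous_on M (cosf i)"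
proof -
  assume i: "i \<in> {1,2,3}"
  have "continuous_on M (\<lambda>x. sg i * gL (Pp (lt x (E i x))) (lt x (E i x)))"
    by (intro continuous_intros cont_gL FF_cont[OF i] bounded_linear.continuous_on[OF bl_Pp])
  thus ?thesis by (rule continuous_on_eq) (simp add: cosf_def gN_def lt_PN inN)
qed

lemma sinf_cont: "i \<in> {1,2,3} \<Longrightarrow> continuous_on M (sinf i)"
proof -
  assume i: "i \<in> {1,2,3}"
  have "continuous_on M (\<lambda>x. sg i * gL (Pp (lt x (E i x))) (Jp (lt x (E i x))))"
    by (intro continuous_intros cont_gL FF_cont[OF i] bounded_linear.continuous_on[OF bl_Pp]
          bounded_linear.continuous_on[OF bl_Jp])
  thus ?thesis by (rule continuous_on_eq) (simp add: sinf_def gN_def lt_PN lt_JN inN)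
qed

lemma sign_cases: "\<exists>j\<in>{1,2,3}. u = E j p \<or> u = - E j p \<Longrightarrow> \<exists>j\<in>{1,2,3}. \<exists>e. (e = 1 \<or> e = -1) \<and> u = e *\<^sub>R E j p"
  by (metis scaleR_minus1_left scaleR_one)

lemma cs_perm:
  assumes P: "PHI a b c" and fM: "phi a b c ` M \<subseteq> M" and q: "q \<in> M" and i: "i \<in> {1,2,3}"
  shows "\<exists>j\<in>{1,2,3}. cosf i q = cosf j (phi a b c q) \<and> sinf i q = sinf j (phi a b c q)"
proof -
  interpret PHI a b c by fact
  have n: "inN q" using inN[OF q] .
  have fq: "f q \<in> M" using fM q by blast
  obtain j e where j: "j \<in> {1,2,3}" and e: "e = 1 \<or> e = -1" and fe: "f (E i q) = e *\<^sub>R E j (f q)"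
    using sign_cases[OF pointwise_perm[OF P fM q i]] by blast
  have ee: "e * e = 1" using e by auto
  have "sg i = gN q (E i q) (E i q)" using E_orth[OF q i i] by simp
  also have "\<dots> = gN (f q) (f (E i q)) (f (E i q))" using n by (simp add: f_gN)
  also have "\<dots> = e * e * gN (f q) (E j (f q)) (E j (f q))" by (simp add: fe gNalg)
  also have "\<dots> = sg j" using E_orth[OF fq j j] ee by simp
  finally have sij: "sg i = sg j" .
  have "cosf i q = sg i * gN (f q) (PN (f q) (f (E i q))) (f (E i q))"
    using n by (simp add: cosf_def f_PN f_gN)
  also have "\<dots> = cosf j (f q)" using sij ee by (simp add: cosf_def fe PN_scaleR gNalg)
  finally have c: "cosf i q = cosf j (f q)" .
  have "sinf i q = sg i * gN (f q) (PN (f q) (f (E i q))) (JN (f q) (f (E i q)))"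
    using n by (simp add: sinf_def f_PN f_gN f_JN)
  also have "\<dots> = sinf j (f q)" using sij ee by (simp add: sinf_def fe PN_scaleR JN_scaleR gNalg)
  finally show ?thesis using c j by blast
qed

end


lemma bl_trfst: "bounded_linear (\<lambda>u::pt. trace (fst u))"
  by (rule bounded_linear_compose[OF bl_trace bounded_linear_fst])
lemma bl_trsnd: "bounded_linear (\<lambda>u::pt. trace (snd u))"
  by (rule bounded_linear_compose[OF bl_trace bounded_linear_snd])

lemma vd_zero_const:
  assumes "((\<lambda>t::real. g t) has_vector_derivative d) (at 0)" "\<And>t. g t = (0::real)"
  shows "d = 0"
proof -
  have "((\<lambda>t::real. g t) has_vector_derivative 0) (at 0)"
    using assms(2) has_vector_derivative_const[of "0::real"] by simp
  thus ?thesis using vector_derivative_unique_at[OF assms(1)] by simp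
qed

context LS2 begin

lemma DF_galg: assumes x: "x \<in> M" and j: "j \<in> {1,2,3}" and v: "v \<in> TM M x"
  shows "DF j x v \<in> galg"
proof -
  obtain \<gamma> where g: "\<gamma> 0 = x" "range \<gamma> \<subseteq> M" "(\<gamma> has_vector_derivative v) (at 0)"
    using v by (auto simp: TM_def)
  have d: "((\<lambda>t. lt (\<gamma> t) (E j (\<gamma> t))) has_vector_derivative DF j x v) (at 0)"
    by (rule chain_vd[OF g(3)]) (use FF_deriv[OF x j] g(1) in simp)
  have inM: "\<gamma> t \<in> M" for t using g(2) by blast
  have gal: "lt (\<gamma> t) (E j (\<gamma> t)) \<in> galg" for t using TM_TN[OF inM E_TM[OF inM j]] .
  have "trace (fst (DF j x v)) = 0"
    by (rule vd_zero_const[OF bounded_linear.has_vector_derivative[OF bl_trfst d]]) (use gal in \<open>simp add: galg_iff\<close>)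
  moreover have "trace (snd (DF j x v)) = 0"
    by (rule vd_zero_const[OF bounded_linear.has_vector_derivative[OF bl_trsnd d]]) (use gal in \<open>simp add: galg_iff\<close>)
  ultimately show ?thesis by (simp add: galg_iff)
qed

lemma LC_TN: assumes x: "x \<in> M" and i: "i \<in> {1,2,3}" and j: "j \<in> {1,2,3}"
  shows "lt x (LC x (E j) (E i x)) \<in> galg"
  using DF_galg[OF x j E_TM[OF x i]] G0_galg inN[OF x]
  by (simp add: LC_eq[OF x j] lt_lmul galg_add)

lemma LC_scaleR: assumes x: "x \<in> M" and j: "j \<in> {1,2,3}"
  shows "LC x (E j) (r *\<^sub>R v) = r *\<^sub>R LC x (E j) v"
  using DF_linear[OF x j] by (simp add: LC_eq[OF x j] linear_scale ltalg G0_scaleR_l scaleR_add_right)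

lemma LC_inv:
  assumes P: "PHI a b c" and fM: "phi a b c ` M \<subseteq> M"
    and sig: "\<And>y i. y \<in> M \<Longrightarrow> i \<in> {1,2,3} \<Longrightarrow> phi a b c (E i y) = \<epsilon> i *\<^sub>R E (\<sigma> i) (phi a b c y)"
    and sigM: "\<And>i. i \<in> {1,2,3} \<Longrightarrow> \<sigma> i \<in> {1,2,3}"
    and eps: "\<And>i. i \<in> {1,2,3} \<Longrightarrow> \<epsilon> i = 1 \<or> \<epsilon> i = -1"
    and x: "x \<in> M" and i: "i \<in> {1,2,3}" and j: "j \<in> {1,2,3}"
  shows "LC (phi a b c x) (E (\<sigma> j)) (E (\<sigma> i) (phi a b c x)) = (\<epsilon> i * \<epsilon> j) *\<^sub>R phi a b c (LC x (E j) (E i x))"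
proof -
  interpret PHI a b c by fact
  have ee: "\<epsilon> k * \<epsilon> k = 1" if "k \<in> {1,2,3}" for k using eps[OF that] by auto
  have Einv: "E (\<sigma> k) (f y) = \<epsilon> k *\<^sub>R f (E k y)" if "y \<in> M" "k \<in> {1,2,3}" for y k
    using sig[OF that] ee[OF that(2)] by simp
  have fx: "f x \<in> M" using fM x by blast
  have A: "lt (f y) (E (\<sigma> j) (f y)) = \<epsilon> j *\<^sub>R Ad c (lt y (E j y))" if y: "y \<in> M" for y
    using inN[OF y] by (simp add: Einv[OF y j] lt_scaleR f_lt)
  have B: "DF (\<sigma> j) (f x) (f v) = \<epsilon> j *\<^sub>R Ad c (DF j x v)" if v: "v \<in> TM M x" for v
  proof -
    obtain \<gamma> where g: "\<gamma> 0 = x" "range \<gamma> \<subseteq> M" "(\<gamma> has_vector_derivative v) (at 0)"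
      using v by (auto simp: TM_def)
    have inM: "\<gamma> t \<in> M" for t using g(2) by blast
    have fg: "((\<lambda>t. f (\<gamma> t)) has_vector_derivative f v) (at 0)"
      by (rule bounded_linear.has_vector_derivative[OF bl_phi g(3)])
    have d1: "((\<lambda>t. lt (f (\<gamma> t)) (E (\<sigma> j) (f (\<gamma> t)))) has_vector_derivative DF (\<sigma> j) (f x) (f v)) (at 0)"
      by (rule chain_vd[OF fg]) (use FF_deriv[OF fx sigM[OF j]] g(1) in simp)
    have d0: "((\<lambda>t. lt (\<gamma> t) (E j (\<gamma> t))) has_vector_derivative DF j x v) (at 0)"
      by (rule chain_vd[OF g(3)]) (use FF_deriv[OF x j] g(1) in simp)
    have bl: "bounded_linear (\<lambda>u. \<epsilon> j *\<^sub>R Ad c u)"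
      by (rule bounded_linear_compose[OF bounded_linear_scaleR_right bl_Ad])
    have d2: "((\<lambda>t. \<epsilon> j *\<^sub>R Ad c (lt (\<gamma> t) (E j (\<gamma> t)))) has_vector_derivative \<epsilon> j *\<^sub>R Ad c (DF j x v)) (at 0)"
      by (rule bounded_linear.has_vector_derivative[OF bl d0])
    have "(\<lambda>t. lt (f (\<gamma> t)) (E (\<sigma> j) (f (\<gamma> t)))) = (\<lambda>t. \<epsilon> j *\<^sub>R Ad c (lt (\<gamma> t) (E j (\<gamma> t))))"
      using A inM by auto
    with d1 have d1': "((\<lambda>t. \<epsilon> j *\<^sub>R Ad c (lt (\<gamma> t) (E j (\<gamma> t)))) has_vector_derivative DF (\<sigma> j) (f x) (f v)) (at 0)"
      by simp
    show ?thesis by (rule vector_derivative_unique_at[OF d1' d2])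
  qed
  have C: "LC (f x) (E (\<sigma> j)) (f v) = \<epsilon> j *\<^sub>R f (LC x (E j) v)" if v: "v \<in> TM M x" for v
  proof -
    have "LC (f x) (E (\<sigma> j)) (f v) = lmul (f x) (DF (\<sigma> j) (f x) (f v) + G0 (lt (f x) (f v)) (lt (f x) (E (\<sigma> j) (f x))))"
      by (rule LC_eq[OF fx sigM[OF j]])
    also have "\<dots> = lmul (f x) (\<epsilon> j *\<^sub>R Ad c (DF j x v + G0 (lt x v) (lt x (E j x))))"
      using inN[OF x] dets by (simp add: B[OF v] A[OF x] f_lt G0_scaleR_r G0_Ad Ad_add Ad_scaleR scaleR_add_right)
    also have "\<dots> = \<epsilon> j *\<^sub>R f (LC x (E j) v)"
      by (simp add: lmul_scaleR f_lmul LC_eq[OF x j] phi_scaleR)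
    finally show ?thesis .
  qed
  have "E (\<sigma> i) (f x) = f (\<epsilon> i *\<^sub>R E i x)" using Einv[OF x i] by (simp add: phi_scaleR)
  hence "LC (f x) (E (\<sigma> j)) (E (\<sigma> i) (f x)) = \<epsilon> j *\<^sub>R f (LC x (E j) (\<epsilon> i *\<^sub>R E i x))"
    using C[OF TM_scaleR[OF E_TM[OF x i]]] by simp
  also have "\<dots> = (\<epsilon> i * \<epsilon> j) *\<^sub>R f (LC x (E j) (E i x))"
    by (simp add: LC_scaleR[OF x j] phi_scaleR)
  finally show ?thesis .
qed

end


lemma connected_finite_partition:
  assumes S: "connected S" and I: "finite I"
    and cl: "\<And>a. a \<in> I \<Longrightarrow> closedin (top_of_set S) (C a)"
    and cov: "S \<subseteq> \<Union>(C ` I)"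
    and dis: "\<And>a b x. a \<in> I \<Longrightarrow> b \<in> I \<Longrightarrow> x \<in> C a \<Longrightarrow> x \<in> C b \<Longrightarrow> a = b"
    and x0: "x0 \<in> S"
  shows "\<exists>a\<in>I. S \<subseteq> C a"
proof -
  obtain a0 where a0: "a0 \<in> I" "x0 \<in> C a0" using cov x0 by blast
  let ?E2 = "\<Union>(C ` (I - {a0}))"
  have c1: "closedin (top_of_set S) (C a0)" using cl a0 by blast
  have c2: "closedin (top_of_set S) ?E2"
    by (rule closedin_Union) (use I cl in auto)
  have cov2: "S \<subseteq> C a0 \<union> ?E2" using cov by blast
  have d: "C a0 \<inter> ?E2 = {}" using dis a0(1) by blast
  have ne: "C a0 \<noteq> {}" using a0 by blast
  have "?E2 = {}" using S c1 c2 cov2 d ne unfolding connected_closedin by blast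
  thus ?thesis using cov2 a0(1) by blast
qed

context LS2 begin

lemma perm_const:
  assumes P: "PHI a b c" and fM: "phi a b c ` M \<subseteq> M" and i: "i \<in> {1,2,3}"
  shows "\<exists>j e. j \<in> {1,2,3} \<and> (e = 1 \<or> e = -1) \<and> (\<forall>x\<in>M. phi a b c (E i x) = e *\<^sub>R E j (phi a b c x))"
proof (cases "M = {}")
  case True thus ?thesis by (intro exI[of _ 1]) auto
next
  case False
  then obtain x0 where x0: "x0 \<in> M" by blast
  let ?f = "phi a b c"
  let ?I = "{1,2,3::nat} \<times> {1, -1::real}"
  define C where "C ae = {x \<in> M. ?f (E i x) - snd ae *\<^sub>R E (fst ae) (?f x) = 0}" for ae
  have fcont: "continuous_on M ?f" by (rule linear_continuous_on[OF bl_phi])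
  have cl: "closedin (top_of_set M) (C ae)" if ae: "ae \<in> ?I" for ae
  proof -
    have "continuous_on M (\<lambda>x. ?f (E i x) - snd ae *\<^sub>R E (fst ae) (?f x))"
    proof (intro continuous_intros)
      show "continuous_on M (\<lambda>x. ?f (E i x))"
        by (rule bounded_linear.continuous_on[OF bl_phi E_contM[OF i]])
      show "continuous_on M (\<lambda>x. E (fst ae) (?f x))"
        by (rule continuous_on_compose2[OF E_contM fcont fM]) (use ae in auto)
    qed
    thus ?thesis unfolding C_def by (rule continuous_closedin_preimage_constant)
  qed
  have cov: "M \<subseteq> \<Union>(C ` ?I)"
  proof
    fix x assume x: "x \<in> M"
    obtain j e where j: "j \<in> {1,2,3}" and e: "e = 1 \<or> e = -1" and fe: "?f (E i x) = e *\<^sub>R E j (?f x)"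
      using sign_cases[OF pointwise_perm[OF P fM x i]] by blast
    have "x \<in> C (j, e)" using x fe by (simp add: C_def)
    moreover have "(j, e) \<in> ?I" using j e by auto
    ultimately show "x \<in> \<Union>(C ` ?I)" by blast
  qed
  have dis: "ae = ae'" if "ae \<in> ?I" "ae' \<in> ?I" "x \<in> C ae" "x \<in> C ae'" for ae ae' x
  proof -
    obtain j e j' e' where ae: "ae = (j, e)" "ae' = (j', e')" by (cases ae, cases ae')
    have j: "j \<in> {1,2,3}" "j' \<in> {1,2,3}" and e: "e = 1 \<or> e = -1" "e' = 1 \<or> e' = -1" using that(1,2) ae by auto
    have x: "x \<in> M" using that(3) by (simp add: C_def)
    have fx: "?f x \<in> M" using fM x by blast
    have eq: "e *\<^sub>R E j (?f x) = e' *\<^sub>R E j' (?f x)" using that(3,4) by (simp add: C_def ae)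
    have "e * sg j = gN (?f x) (e *\<^sub>R E j (?f x)) (E j (?f x))" using E_orth[OF fx j(1) j(1)] by (simp add: gNalg)
    also have "\<dots> = gN (?f x) (e' *\<^sub>R E j' (?f x)) (E j (?f x))" using eq by simp
    also have "\<dots> = e' * (if j' = j then sg j' else 0)" using E_orth[OF fx j(2) j(1)] by (simp add: gNalg)
    finally have h: "e * sg j = e' * (if j' = j then sg j' else 0)" .
    have "j' = j" using h e sg_nz[of j] by (cases "j' = j") auto
    moreover have "e = e'" using h sg_nz[of j] \<open>j' = j\<close> by simp
    ultimately show ?thesis using ae by simp
  qed
  have fin: "finite ?I" by simp
  have "\<exists>ae\<in>?I. M \<subseteq> C ae" by (rule connected_finite_partition[OF conn fin cl cov dis x0])
  then obtain ae where ae: "ae \<in> ?I" "M \<subseteq> C ae" ..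
  thus ?thesis unfolding C_def by (intro exI[of _ "fst ae"] exI[of _ "snd ae"]) auto
qed

lemma perm_choice:
  assumes P: "PHI a b c" and fM: "phi a b c ` M \<subseteq> M"
  shows "\<exists>\<sigma> \<epsilon>. (\<forall>i\<in>{1,2,3}. \<sigma> i \<in> {1,2,3} \<and> (\<epsilon> i = 1 \<or> \<epsilon> i = -1) \<and>
            (\<forall>x\<in>M. phi a b c (E i x) = \<epsilon> i *\<^sub>R E (\<sigma> i) (phi a b c x)))"
proof -
  have "\<forall>i\<in>{1,2,3}. \<exists>j e. j \<in> {1,2,3} \<and> (e = 1 \<or> e = -1) \<and> (\<forall>x\<in>M. phi a b c (E i x) = e *\<^sub>R E j (phi a b c x))"
    using perm_const[OF P fM] by blast
  then obtain \<sigma> where s: "\<forall>i\<in>{1,2,3}. \<exists>e. \<sigma> i \<in> {1,2,3} \<and> (e = 1 \<or> e = -1) \<and> (\<forall>x\<in>M. phi a b c (E i x) = e *\<^sub>R E (\<sigma> i) (phi a b c x))"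
    by (rule bchoice[THEN exE])
  then obtain \<epsilon> where "\<forall>i\<in>{1,2,3}. \<sigma> i \<in> {1,2,3} \<and> (\<epsilon> i = 1 \<or> \<epsilon> i = -1) \<and> (\<forall>x\<in>M. phi a b c (E i x) = \<epsilon> i *\<^sub>R E (\<sigma> i) (phi a b c x))"
    by (rule bchoice[THEN exE])
  thus ?thesis by blast
qed

end


lemma Iso_PHI: "f \<in> Iso_o \<Longrightarrow> \<exists>a b c. PHI a b c \<and> f = phi a b c"
  unfolding Iso_o_def PHI_def by blast

context LS2 begin

definition om :: "nat \<Rightarrow> nat \<Rightarrow> nat \<Rightarrow> pt \<Rightarrow> real" where
  "om i j k x = sg k * gN x (LC x (E j) (E i x)) (E k x)"
definition hh :: "nat \<Rightarrow> nat \<Rightarrow> nat \<Rightarrow> pt \<Rightarrow> real" where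
  "hh i j k x = sg k * gN x (LC x (E j) (E i x)) (JN x (E k x))"

lemma dE_cont: assumes i: "i \<in> {1,2,3}" and j: "j \<in> {1,2,3}"
  shows "continuous_on M (\<lambda>x. frechet_derivative (E j) (at x) (E i x))"
proof (rule cont_lin_apply[where D="\<lambda>x. frechet_derivative (E j) (at x)" and g="E i"])
  show "continuous_on M (\<lambda>x. frechet_derivative (E j) (at x) v)" for v
    by (rule continuous_on_subset[OF E_dcont[OF j] MU])
  show "linear (frechet_derivative (E j) (at x))" if "x \<in> M" for x
    using linear_frechet_derivative[OF E_diff[OF j]] MU that by blast
  show "continuous_on M (E i)" by (rule E_contM[OF i])
qed

lemma LCL_cont: assumes i: "i \<in> {1,2,3}" and j: "j \<in> {1,2,3}"
  shows "continuous_on M (\<lambda>x. Dlt x (E j x) (frechet_derivative (E j) (at x) (E i x)) (E i x) + G0 (lt x (E i x)) (lt x (E j x)))"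
proof -
  have n: "\<forall>x\<in>M. inN x" using inN by blast
  show ?thesis
    by (intro continuous_intros cont_Dlt cont_G0 continuous_on_id E_contM dE_cont FF_cont n i j)
qed

lemma lt_LC: assumes x: "x \<in> M" and i: "i \<in> {1,2,3}" and j: "j \<in> {1,2,3}"
  shows "lt x (LC x (E j) (E i x)) = Dlt x (E j x) (frechet_derivative (E j) (at x) (E i x)) (E i x) + G0 (lt x (E i x)) (lt x (E j x))"
  using inN[OF x] by (simp add: LC_eq[OF x j] lt_lmul DF_def)

lemma om_cont: assumes i: "i \<in> {1,2,3}" and j: "j \<in> {1,2,3}" and k: "k \<in> {1,2,3}"
  shows "continuous_on M (om i j k)"
proof -
  have "continuous_on M (\<lambda>x. sg k * gL (Dlt x (E j x) (frechet_derivative (E j) (at x) (E i x)) (E i x) + G0 (lt x (E i x)) (lt x (E j x))) (lt x (E k x)))"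
    by (intro continuous_intros cont_gL LCL_cont FF_cont i j k)
  thus ?thesis
  proof (rule continuous_on_eq)
    fix x assume x: "x \<in> M"
    show "sg k * gL (Dlt x (E j x) (frechet_derivative (E j) (at x) (E i x)) (E i x) + G0 (lt x (E i x)) (lt x (E j x))) (lt x (E k x)) = om i j k x"
      using lt_LC[OF x i j] by (simp add: om_def gN_def)
  qed
qed

lemma hh_cont: assumes i: "i \<in> {1,2,3}" and j: "j \<in> {1,2,3}" and k: "k \<in> {1,2,3}"
  shows "continuous_on M (hh i j k)"
proof -
  have "continuous_on M (\<lambda>x. sg k * gL (Dlt x (E j x) (frechet_derivative (E j) (at x) (E i x)) (E i x) + G0 (lt x (E i x)) (lt x (E j x))) (Jp (lt x (E k x))))"
    by (intro continuous_intros cont_gL LCL_cont FF_cont i j k bounded_linear.continuous_on[OF bl_Jp])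
  thus ?thesis
  proof (rule continuous_on_eq)
    fix x assume x: "x \<in> M"
    show "sg k * gL (Dlt x (E j x) (frechet_derivative (E j) (at x) (E i x)) (E i x) + G0 (lt x (E i x)) (lt x (E j x))) (Jp (lt x (E k x))) = hh i j k x"
      using lt_LC[OF x i j] inN[OF x] by (simp add: hh_def gN_def lt_JN)
  qed
qed

lemma coef_perm:
  assumes P: "PHI a b c" and fM: "phi a b c ` M \<subseteq> M" and q: "q \<in> M"
    and i: "i \<in> {1,2,3}" and j: "j \<in> {1,2,3}" and k: "k \<in> {1,2,3}"
  shows "\<exists>r a' b' c'. (r = 1 \<or> r = -1) \<and> a' \<in> {1,2,3} \<and> b' \<in> {1,2,3} \<and> c' \<in> {1,2,3} \<and>
     om i j k q = r * om a' b' c' (phi a b c q) \<and> hh i j k q = r * hh a' b' c' (phi a b c q)"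
proof -
  interpret PHI a b c by fact
  obtain \<sigma> \<epsilon> where se: "\<forall>i\<in>{1,2,3}. \<sigma> i \<in> {1,2,3} \<and> (\<epsilon> i = 1 \<or> \<epsilon> i = -1) \<and>
            (\<forall>x\<in>M. f (E i x) = \<epsilon> i *\<^sub>R E (\<sigma> i) (f x))"
    using perm_choice[OF P fM] by blast
  have sig: "\<And>y i. y \<in> M \<Longrightarrow> i \<in> {1,2,3} \<Longrightarrow> f (E i y) = \<epsilon> i *\<^sub>R E (\<sigma> i) (f y)" using se by blast
  have sigM: "\<And>i. i \<in> {1,2,3} \<Longrightarrow> \<sigma> i \<in> {1,2,3}" using se by blast
  have eps: "\<And>i. i \<in> {1,2,3} \<Longrightarrow> \<epsilon> i = 1 \<or> \<epsilon> i = -1" using se by blast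
  have ee: "\<epsilon> l * \<epsilon> l = 1" if "l \<in> {1,2,3}" for l using eps[OF that] by auto
  have n: "inN q" using inN[OF q] .
  have fq: "f q \<in> M" using fM q by blast
  have Ek: "E (\<sigma> k) (f q) = \<epsilon> k *\<^sub>R f (E k q)" using sig[OF q k] ee[OF k] by simp
  have "sg k = gN q (E k q) (E k q)" using E_orth[OF q k k] by simp
  also have "\<dots> = gN (f q) (f (E k q)) (f (E k q))" using n by (simp add: f_gN)
  also have "\<dots> = \<epsilon> k * \<epsilon> k * gN (f q) (E (\<sigma> k) (f q)) (E (\<sigma> k) (f q))" by (simp add: sig[OF q k] gNalg)
  also have "\<dots> = sg (\<sigma> k)" using E_orth[OF fq sigM[OF k] sigM[OF k]] ee[OF k] by simp
  finally have sk: "sg k = sg (\<sigma> k)" .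
  have LCf: "LC (f q) (E (\<sigma> j)) (E (\<sigma> i) (f q)) = (\<epsilon> i * \<epsilon> j) *\<^sub>R f (LC q (E j) (E i q))"
    by (rule LC_inv[OF P fM sig sigM eps q i j])
  define r where "r = \<epsilon> i * \<epsilon> j * \<epsilon> k"
  have r: "r = 1 \<or> r = -1" using eps[OF i] eps[OF j] eps[OF k] unfolding r_def by auto
  have rr: "r * r = 1" using r by auto
  have o: "om (\<sigma> i) (\<sigma> j) (\<sigma> k) (f q) = r * om i j k q"
    using n by (simp add: om_def LCf Ek gNalg f_gN sk r_def)
  have h: "hh (\<sigma> i) (\<sigma> j) (\<sigma> k) (f q) = r * hh i j k q"
    using n by (simp add: hh_def LCf Ek gNalg f_gN f_JN JN_scaleR sk r_def)
  have "om i j k q = r * om (\<sigma> i) (\<sigma> j) (\<sigma> k) (f q)" "hh i j k q = r * hh (\<sigma> i) (\<sigma> j) (\<sigma> k) (f q)"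
    using o h rr by (simp_all add: mult.assoc[symmetric])
  thus ?thesis using r sigM[OF i] sigM[OF j] sigM[OF k] by blast
qed

end


context LS2 begin

lemma main_LS2:
  assumes GI: "G \<subseteq> Iso_o" and GM: "\<forall>f\<in>G. f ` M = M" and Gt: "\<forall>p\<in>M. \<forall>q\<in>M. \<exists>f\<in>G. f p = q"
  shows "(\<exists>t. \<forall>i\<in>{1,2,3}. \<forall>p\<in>M. cos (2 * \<theta> i p) = cos (2 * t i) \<and> sin (2 * \<theta> i p) = sin (2 * t i))
       \<and> (\<exists>\<omega> h. \<forall>p\<in>M. \<forall>i\<in>{1,2,3}. \<forall>j\<in>{1,2,3}.
            LC p (E j) (E i p) = (\<Sum>k\<in>{1,2,3}. \<omega> i j k *\<^sub>R E k p) + (\<Sum>k\<in>{1,2,3}. h i j k *\<^sub>R JN p (E k p)))"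
proof (cases "M = {}")
  case True thus ?thesis by auto
next
  case False
  then obtain p0 where p0: "p0 \<in> M" by blast
  have toP0: "\<exists>a b c. PHI a b c \<and> phi a b c ` M \<subseteq> M \<and> phi a b c q = p0" if q: "q \<in> M" for q
  proof -
    obtain f where f: "f \<in> G" "f q = p0" using Gt q p0 by blast
    obtain a b c where abc: "PHI a b c" "f = phi a b c" using Iso_PHI GI f(1) by blast
    show ?thesis using abc f GM by blast
  qed
  have cconst: "cos (2 * \<theta> i p) = cos (2 * \<theta> i p0) \<and> sin (2 * \<theta> i p) = sin (2 * \<theta> i p0)"
    if i: "i \<in> {1,2,3}" and p: "p \<in> M" for i p
  proof -
    have rng: "\<exists>j\<in>{1,2,3}. cosf i q = cosf j p0 \<and> sinf i q = sinf j p0" if q: "q \<in> M" for q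
    proof -
      obtain a b c where abc: "PHI a b c" "phi a b c ` M \<subseteq> M" "phi a b c q = p0" using toP0[OF q] by blast
      show ?thesis using cs_perm[OF abc(1,2) q i] abc(3) by simp
    qed
    have f1: "cosf i ` M \<subseteq> (\<lambda>j. cosf j p0) ` {1,2,3}" using rng by blast
    have f2: "sinf i ` M \<subseteq> (\<lambda>j. sinf j p0) ` {1,2,3}" using rng by blast
    have "cosf i constant_on M"
      by (rule continuous_finite_range_constant[OF conn cosf_cont[OF i]]) (rule finite_subset[OF f1], simp)
    hence c: "cosf i p = cosf i p0" using p p0 unfolding constant_on_def by metis
    have "sinf i constant_on M"
      by (rule continuous_finite_range_constant[OF conn sinf_cont[OF i]]) (rule finite_subset[OF f2], simp)
    hence s: "sinf i p = sinf i p0" using p p0 unfolding constant_on_def by metis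
    show ?thesis using c s cosf_eq[OF p i] cosf_eq[OF p0 i] sinf_eq[OF p i] sinf_eq[OF p0 i] by simp
  qed
  have oconst: "om i j k p = om i j k p0 \<and> hh i j k p = hh i j k p0"
    if i: "i \<in> {1,2,3}" and j: "j \<in> {1,2,3}" and k: "k \<in> {1,2,3}" and p: "p \<in> M" for i j k p
  proof -
    let ?T = "{1, -1::real} \<times> {1,2,3::nat} \<times> {1,2,3::nat} \<times> {1,2,3::nat}"
    have rng: "\<exists>t\<in>?T. om i j k q = fst t * om (fst (snd t)) (fst (snd (snd t))) (snd (snd (snd t))) p0
                   \<and> hh i j k q = fst t * hh (fst (snd t)) (fst (snd (snd t))) (snd (snd (snd t))) p0"
      if q: "q \<in> M" for q
    proof -
      obtain a b c where abc: "PHI a b c" "phi a b c ` M \<subseteq> M" "phi a b c q = p0" using toP0[OF q] by blast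
      obtain r a' b' c' where rr: "(r = 1 \<or> r = -1)" "a' \<in> {1,2,3}" "b' \<in> {1,2,3}" "c' \<in> {1,2,3}"
        "om i j k q = r * om a' b' c' p0" "hh i j k q = r * hh a' b' c' p0"
        using coef_perm[OF abc(1,2) q i j k] abc(3) by auto
      have mem: "(r, a', b', c') \<in> ?T" using rr(1-4) by blast
      show ?thesis by (rule bexI[OF _ mem]) (simp only: fst_conv snd_conv rr(5,6))
    qed
    have f1: "om i j k ` M \<subseteq> (\<lambda>t. fst t * om (fst (snd t)) (fst (snd (snd t))) (snd (snd (snd t))) p0) ` ?T"
      using rng by blast
    have f2: "hh i j k ` M \<subseteq> (\<lambda>t. fst t * hh (fst (snd t)) (fst (snd (snd t))) (snd (snd (snd t))) p0) ` ?T"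
      using rng by blast
    have "om i j k constant_on M"
      by (rule continuous_finite_range_constant[OF conn om_cont[OF i j k]]) (rule finite_subset[OF f1], simp)
    hence c: "om i j k p = om i j k p0" using p p0 unfolding constant_on_def by metis
    have "hh i j k constant_on M"
      by (rule continuous_finite_range_constant[OF conn hh_cont[OF i j k]]) (rule finite_subset[OF f2], simp)
    hence h: "hh i j k p = hh i j k p0" using p p0 unfolding constant_on_def by metis
    show ?thesis using c h by simp
  qed
  have P1: "\<exists>t. \<forall>i\<in>{1,2,3}. \<forall>p\<in>M. cos (2 * \<theta> i p) = cos (2 * t i) \<and> sin (2 * \<theta> i p) = sin (2 * t i)"
    using cconst by (intro exI[of _ "\<lambda>i. \<theta> i p0"]) blast
  have P2: "LC p (E j) (E i p) = (\<Sum>k\<in>{1,2,3}. om i j k p0 *\<^sub>R E k p) + (\<Sum>k\<in>{1,2,3}. hh i j k p0 *\<^sub>R JN p (E k p))"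
    if p: "p \<in> M" and i: "i \<in> {1,2,3}" and j: "j \<in> {1,2,3}" for p i j
  proof -
    have "LC p (E j) (E i p) = (\<Sum>k\<in>{1,2,3}. (sg k * gN p (LC p (E j) (E i p)) (E k p)) *\<^sub>R E k p)
         + (\<Sum>k\<in>{1,2,3}. (sg k * gN p (LC p (E j) (E i p)) (JN p (E k p))) *\<^sub>R JN p (E k p))"
      by (rule coordN[OF p LC_TN[OF p i j]])
    also have "\<dots> = (\<Sum>k\<in>{1,2,3}. om i j k p0 *\<^sub>R E k p) + (\<Sum>k\<in>{1,2,3}. hh i j k p0 *\<^sub>R JN p (E k p))"
    proof -
      have "(\<Sum>k\<in>{1,2,3}. (sg k * gN p (LC p (E j) (E i p)) (E k p)) *\<^sub>R E k p) = (\<Sum>k\<in>{1,2,3}. om i j k p0 *\<^sub>R E k p)"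
        by (rule sum.cong[OF refl]) (use oconst[OF i j _ p] in \<open>simp add: om_def\<close>)
      moreover have "(\<Sum>k\<in>{1,2,3}. (sg k * gN p (LC p (E j) (E i p)) (JN p (E k p))) *\<^sub>R JN p (E k p)) = (\<Sum>k\<in>{1,2,3}. hh i j k p0 *\<^sub>R JN p (E k p))"
        by (rule sum.cong[OF refl]) (use oconst[OF i j _ p] in \<open>simp add: hh_def\<close>)
      ultimately show ?thesis by simp
    qed
    finally show ?thesis .
  qed
  have "\<exists>\<omega> h. \<forall>p\<in>M. \<forall>i\<in>{1,2,3}. \<forall>j\<in>{1,2,3}.
            LC p (E j) (E i p) = (\<Sum>k\<in>{1,2,3}. \<omega> i j k *\<^sub>R E k p) + (\<Sum>k\<in>{1,2,3}. h i j k *\<^sub>R JN p (E k p))"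
    by (intro exI[of _ "\<lambda>i j k. om i j k p0"] exI[of _ "\<lambda>i j k. hh i j k p0"] ballI) (rule P2)
  with P1 show ?thesis by (rule conjI)
qed

end


theorem mainTheorem6:
  fixes M :: "pt set" and E :: "nat \<Rightarrow> pt \<Rightarrow> pt" and \<theta> :: "nat \<Rightarrow> pt \<Rightarrow> real"
  assumes "lagrangian M" and "connected M" and "ext_homogeneous M"
    and "\<exists>U. open U \<and> M \<subseteq> U \<and> (\<forall>i\<in>{1,2,3}. smooth_on (E i) U)"
    and "\<forall>p\<in>M. Delta1_frame M p (\<lambda>i. E i p) \<and> typeI M p (\<lambda>i. E i p) (\<lambda>i. \<theta> i p)"
    and "\<forall>p\<in>M. \<forall>e \<psi>. Delta1_frame M p e \<and> typeI M p e \<psi> \<longrightarrow>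
           (\<forall>i\<in>{1,2,3}. \<exists>j\<in>{1,2,3}. e i = E j p \<or> e i = - E j p)"
  shows "(\<exists>t. \<forall>i\<in>{1,2,3}. \<forall>p\<in>M. cos (2 * \<theta> i p) = cos (2 * t i) \<and> sin (2 * \<theta> i p) = sin (2 * t i))
       \<and> (\<exists>\<omega> h. \<forall>p\<in>M. \<forall>i\<in>{1,2,3}. \<forall>j\<in>{1,2,3}.
            LC p (E j) (E i p) = (\<Sum>k\<in>{1,2,3}. \<omega> i j k *\<^sub>R E k p) + (\<Sum>k\<in>{1,2,3}. h i j k *\<^sub>R JN p (E k p)))"
proof -
  obtain U where U: "open U" "M \<subseteq> U" "\<forall>i\<in>{1,2,3}. smooth_on (E i) U" using assms(4) by blast
  interpret LS2 M E \<theta> U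
  proof (unfold_locales)
    show "lagrangian M" by (rule assms(1))
    show "\<And>p. p \<in> M \<Longrightarrow> Delta1_frame M p (\<lambda>i. E i p) \<and> typeI M p (\<lambda>i. E i p) (\<lambda>i. \<theta> i p)"
      using assms(5) by blast
    show "connected M" by (rule assms(2))
    show "open U" by (rule U(1))
    show "M \<subseteq> U" by (rule U(2))
    show "\<And>i. i \<in> {1, 2, 3} \<Longrightarrow> smooth_on (E i) U" using U(3) by blast
    show "\<forall>p\<in>M. \<forall>e \<psi>. Delta1_frame M p e \<and> typeI M p e \<psi> \<longrightarrow> (\<forall>i\<in>{1, 2, 3}. \<exists>j\<in>{1, 2, 3}. e i = E j p \<or> e i = - E j p)"
      by (rule assms(6))
  qed
  obtain G where G: "G \<subseteq> Iso_o" "\<forall>f\<in>G. f ` M = M" "\<forall>p\<in>M. \<forall>q\<in>M. \<exists>f\<in>G. f p = q"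
    using assms(3) unfolding ext_homogeneous_def by blast
  show ?thesis by (rule main_LS2[OF G])
qed


end
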